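(* Let $Q$ be a process on $A^{\mathbb{Z}}$ and $\Theta\subseteq\mathcal{P}_{\mathrm{erg}}(A^{\mathbb{Z}})$ such that $h(P,Q)$ exists for all $P\in\Theta$. The following are equivalent: 1. $\bar\beta_\varepsilon(P,Q)\le -h(P,Q)$ for all $P\in\Theta$ and all $\varepsilon\in(0,1)$. 2. For every $\Omega\subseteq\Theta$ and every $\eta>0$ there are subsets $M_n\subseteq A^n$ with $\lim_{n}P^{(n)}(M_n)=1$ for all $P\in\Omega$ and with $\limsup_n\frac1n\log Q^{(n)}(M_n)\le -h(\Omega,Q)+\eta$ if $h(\Omega,Q)<\infty$, resp. $\limsup_n\frac1n\log Q^{(n)}(M_n)\le -1/\eta$ if $h(\Omega,Q)=\infty$; and moreover every sequence $\tilde M_n\subseteq A^n$ with $\lim_n P^{(n)}(\tilde M_n)=1$ for all $P\in\Omega$ satisfies $\liminf_n\frac1n\log Q^{(n)}(\tilde M_n)\ge -h(\Omega,Q)$.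
   Context: $A$ is a finite set; a process is a probability measure on $A^{\mathbb{Z}}$ with the product $\sigma$-field generated by cylinders. $P^{(n)}$ denotes the marginal of $P$ on coordinates $\{0,\dots,n-1\}$, a probability on $A^n$. $\mathcal{P}_{\mathrm{erg}}(A^{\mathbb{Z}})$ is the set of shift-ergodic processes. $H(\cdot,\cdot)$ is the relative entropy (Kullback–Leibler divergence) of probability measures on a finite set; $h(P,Q):=\lim_n\frac1nH(P^{(n)},Q^{(n)})$ when the limit exists in $[0,+\infty]$, and $h(\Omega,Q):=\inf_{P\in\Omega}h(P,Q)$. For $\varepsilon\in(0,1)$, $\beta_{\varepsilon,n}(P,Q):=\min\{\log Q^{(n)}(M):M\subseteq A^n,\ P^{(n)}(M)\ge1-\varepsilon\}$ and $\bar\beta_\varepsilon(P,Q):=\limsup_n\frac1n\beta_{\varepsilon,n}(P,Q)$. *)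

theory Defs
  imports "HOL-Probability.Probability"
begin

definition process :: "(int \<Rightarrow> 'a::finite) measure \<Rightarrow> bool" where
  "process P \<longleftrightarrow> prob_space P \<and>
     sets P = sets (PiM (UNIV::int set) (\<lambda>_. count_space (UNIV::'a set)))"

definition shift :: "(int \<Rightarrow> 'a) \<Rightarrow> (int \<Rightarrow> 'a)" where
  "shift x = (\<lambda>i. x (i + 1))"

definition ergodic_process :: "(int \<Rightarrow> 'a::finite) measure \<Rightarrow> bool" where
  "ergodic_process P \<longleftrightarrow> process P \<and> shift \<in> measurable P P \<and> distr P P shift = P \<and>
     (\<forall>S\<in>sets P. shift -` S \<inter> space P = S \<longrightarrow> measure P S = 0 \<or> measure P S = 1)"

definition words :: "nat \<Rightarrow> 'a list set" where
  "words n = {w. length w = n}"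

definition marg :: "(int \<Rightarrow> 'a) measure \<Rightarrow> nat \<Rightarrow> 'a list set \<Rightarrow> real" where
  "marg P n M = measure P {x \<in> space P. map (\<lambda>i. x (int i)) [0..<n] \<in> M}"

definition eln :: "real \<Rightarrow> ereal" where
  "eln x = (if x = 0 then -\<infinity> else ereal (ln x))"

definition kl_term :: "real \<Rightarrow> real \<Rightarrow> ereal" where
  "kl_term p q = (if p = 0 then 0 else if q = 0 then \<infinity> else ereal (p * ln (p / q)))"

definition relent :: "(int \<Rightarrow> 'a) measure \<Rightarrow> (int \<Rightarrow> 'a) measure \<Rightarrow> nat \<Rightarrow> ereal" where
  "relent P Q n = (\<Sum>w\<in>words n. kl_term (marg P n {w}) (marg Q n {w}))"

definition relent_rate_seq :: "(int \<Rightarrow> 'a) measure \<Rightarrow> (int \<Rightarrow> 'a) measure \<Rightarrow> nat \<Rightarrow> ereal" where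
  "relent_rate_seq P Q n = ereal (1 / real n) * relent P Q n"

definition rate_exists :: "(int \<Rightarrow> 'a) measure \<Rightarrow> (int \<Rightarrow> 'a) measure \<Rightarrow> bool" where
  "rate_exists P Q \<longleftrightarrow> (\<exists>L. relent_rate_seq P Q \<longlonglongrightarrow> L)"

definition hrate :: "(int \<Rightarrow> 'a) measure \<Rightarrow> (int \<Rightarrow> 'a) measure \<Rightarrow> ereal" where
  "hrate P Q = lim (relent_rate_seq P Q)"

definition hrate_set :: "(int \<Rightarrow> 'a) measure set \<Rightarrow> (int \<Rightarrow> 'a) measure \<Rightarrow> ereal" where
  "hrate_set \<Omega> Q = (INF P\<in>\<Omega>. hrate P Q)"

definition beta :: "real \<Rightarrow> nat \<Rightarrow> (int \<Rightarrow> 'a) measure \<Rightarrow> (int \<Rightarrow> 'a) measure \<Rightarrow> ereal" where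
  "beta \<epsilon> n P Q = Min ((\<lambda>M. eln (marg Q n M)) ` {M. M \<subseteq> words n \<and> marg P n M \<ge> 1 - \<epsilon>})"

definition beta_bar :: "real \<Rightarrow> (int \<Rightarrow> 'a) measure \<Rightarrow> (int \<Rightarrow> 'a) measure \<Rightarrow> ereal" where
  "beta_bar \<epsilon> P Q = limsup (\<lambda>n. ereal (1 / real n) * beta \<epsilon> n P Q)"

end

theory Submission
  imports Defs
begin


lemma process_space: "process P \<Longrightarrow> space P = UNIV"
  unfolding process_def apply (elim conjE) apply (drule sets_eq_imp_space_eq) apply (simp add: space_PiM)
  done

lemma process_coord_meas:
  assumes "process P" shows "(\<lambda>x. x i) \<in> measurable P (count_space UNIV)"
proof -
  have 1: "(\<lambda>x. x i) \<in> measurable (PiM (UNIV::int set) (\<lambda>_. count_space (UNIV::'a set))) (count_space UNIV)"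
    by (rule measurable_component_singleton) simp
  have 2: "sets P = sets (PiM (UNIV::int set) (\<lambda>_. count_space (UNIV::'a set)))"
    using assms unfolding process_def by simp
  show ?thesis by (subst measurable_cong_sets[OF 2 refl]) (rule 1)
qed

lemma process_list_meas:
  fixes P :: "(int \<Rightarrow> 'a::finite) measure"
  assumes "process P"
  shows "(\<lambda>x. map (\<lambda>i. x (f i)) [0..<k]) \<in> measurable P (count_space UNIV)"
proof (rule iffD2[OF measurable_count_space_eq2_countable], intro conjI ballI)
  show "(\<lambda>x. map (\<lambda>i. x (f i)) [0..<k]) \<in> space P \<rightarrow> UNIV" by simp
  fix w :: "'a list"
  show "(\<lambda>x. map (\<lambda>i. x (f i)) [0..<k]) -` {w} \<inter> space P \<in> sets P"
  proof (cases "length w = k")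
    case False
    then have "(\<lambda>x. map (\<lambda>i. x (f i)) [0..<k]) -` {w} \<inter> space P = {}" by auto
    then show ?thesis by simp
  next
    case True
    have "(\<lambda>x. map (\<lambda>i. x (f i)) [0..<k]) -` {w} \<inter> space P = {x\<in>space P. \<forall>i<k. x (f i) = w ! i}"
      by (rule set_eqI) (simp add: list_eq_iff_nth_eq True conj_commute)
    also have "\<dots> = space P \<inter> (\<Inter>i\<in>{..<k}. {x\<in>space P. x (f i) = w ! i})" by blast
    also have "\<dots> \<in> sets P"
    proof (cases "k = 0")
      case False
      have "(\<Inter>i\<in>{..<k}. {x\<in>space P. x (f i) = w ! i}) \<in> sets P"
      proof (rule sets.finite_INT)
        fix i 
        have "(\<lambda>x. x (f i)) -` {w ! i} \<inter> space P \<in> sets P"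
          by (rule measurable_sets[OF process_coord_meas[OF assms]]) simp
        then show "{x\<in>space P. x (f i) = w ! i} \<in> sets P" by (simp add: vimage_def Int_def conj_commute)
      qed (use False in auto)
      then show ?thesis by (rule sets.Int[OF sets.top])
    qed simp
    finally show ?thesis .
  qed
qed

lemma process_list_sets:
  fixes P :: "(int \<Rightarrow> 'a::finite) measure"
  assumes "process P"
  shows "{x\<in>space P. map (\<lambda>i. x (f i)) [0..<k] \<in> M} \<in> sets P"
proof -
  have "(\<lambda>x. map (\<lambda>i. x (f i)) [0..<k]) -` M \<inter> space P \<in> sets P"
    by (rule measurable_sets[OF process_list_meas[OF assms]]) simp
  then show ?thesis by (simp add: vimage_def Int_def conj_commute)
qed


lemma finite_words[simp]: "finite (words n :: 'a::finite list set)"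
proof -
  have "words n = {xs :: 'a list. set xs \<subseteq> UNIV \<and> length xs = n}" by (simp add: words_def)
  then show ?thesis using finite_lists_length_eq[OF finite_class.finite_UNIV, of n] by simp
qed

lemma card_words: "card (words n :: 'a::finite list set) = CARD('a) ^ n"
proof -
  have "words n = {xs :: 'a list. set xs \<subseteq> UNIV \<and> length xs = n}" by (simp add: words_def)
  then show ?thesis using card_lists_length_eq[OF finite_class.finite_UNIV, of n] by simp
qed

lemma marg_nonneg: "marg P n M \<ge> 0" unfolding marg_def by simp

lemma process_prob: "process P \<Longrightarrow> prob_space P" unfolding process_def by simp

lemma process_fin: "process P \<Longrightarrow> finite_measure P"
  using prob_space.axioms(1)[OF process_prob] .

lemma marg_le1: "process P \<Longrightarrow> marg P n M \<le> 1"
  unfolding marg_def using prob_space.prob_le_1[OF process_prob] by blast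

lemma marg_words:
  fixes P :: "(int \<Rightarrow> 'a::finite) measure"
  assumes "process P" shows "marg P n (words n) = 1"
proof -
  have "{x \<in> space P. map (\<lambda>i. x (int i)) [0..<n] \<in> words n} = space P" by (auto simp: words_def)
  then show ?thesis unfolding marg_def using prob_space.prob_space[OF process_prob[OF assms]] by simp
qed

lemma marg_inter_words: "marg P n M = marg P n (M \<inter> words n)"
  unfolding marg_def words_def by (rule arg_cong[where f="measure P"]) auto

lemma marg_sum:
  fixes P :: "(int \<Rightarrow> 'a::finite) measure"
  assumes "process P" and "M \<subseteq> words n"
  shows "marg P n M = (\<Sum>w\<in>M. marg P n {w})"
proof -
  have fin: "finite M" using assms(2) finite_subset finite_words by blast
  have "{x \<in> space P. map (\<lambda>i. x (int i)) [0..<n] \<in> M} = (\<Union>w\<in>M. {x \<in> space P. map (\<lambda>i. x (int i)) [0..<n] \<in> {w}})"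
    by (rule set_eqI) auto
  then have "marg P n M = measure P (\<Union>w\<in>M. {x \<in> space P. map (\<lambda>i. x (int i)) [0..<n] \<in> {w}})"
    unfolding marg_def by simp
  also have "\<dots> = (\<Sum>w\<in>M. measure P {x \<in> space P. map (\<lambda>i. x (int i)) [0..<n] \<in> {w}})"
  proof (rule measure_finite_Union[OF fin])
    show "(\<lambda>w. {x \<in> space P. map (\<lambda>i. x (int i)) [0..<n] \<in> {w}}) ` M \<subseteq> sets P"
      using process_list_sets[OF assms(1), of "\<lambda>i. int i" n] by blast
    show "disjoint_family_on (\<lambda>w. {x \<in> space P. map (\<lambda>i. x (int i)) [0..<n] \<in> {w}}) M"
      unfolding disjoint_family_on_def by blast
    show "emeasure P {x \<in> space P. map (\<lambda>i. x (int i)) [0..<n] \<in> {w}} \<noteq> \<infinity>" for w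
      using finite_measure.emeasure_finite[OF process_fin[OF assms(1)]] by (simp add: infinity_ennreal_def)
  qed
  finally show ?thesis unfolding marg_def .
qed

lemma marg_sum_all:
  fixes P :: "(int \<Rightarrow> 'a::finite) measure"
  assumes "process P"
  shows "(\<Sum>w\<in>words n. marg P n {w}) = 1"
  using marg_sum[OF assms order_refl] marg_words[OF assms] by simp

lemma marg_mono:
  fixes P :: "(int \<Rightarrow> 'a::finite) measure"
  assumes "process P" "M \<subseteq> M'"
  shows "marg P n M \<le> marg P n M'"
  unfolding marg_def
proof (rule finite_measure.finite_measure_mono[OF process_fin[OF assms(1)]])
  show "{x \<in> space P. map (\<lambda>i. x (int i)) [0..<n] \<in> M} \<subseteq> {x \<in> space P. map (\<lambda>i. x (int i)) [0..<n] \<in> M'}"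
    using assms(2) by blast
  show "{x \<in> space P. map (\<lambda>i. x (int i)) [0..<n] \<in> M'} \<in> sets P"
    by (rule process_list_sets[OF assms(1)])
qed

lemma marg_compl:
  fixes P :: "(int \<Rightarrow> 'a::finite) measure"
  assumes "process P" "M \<subseteq> words n"
  shows "marg P n (words n - M) = 1 - marg P n M"
proof -
  have "marg P n (words n) = (\<Sum>w\<in>words n. marg P n {w})" by (rule marg_sum[OF assms(1) order_refl])
  also have "\<dots> = (\<Sum>w\<in>words n - M. marg P n {w}) + (\<Sum>w\<in>M. marg P n {w})"
    using assms(2) sum.subset_diff[of M "words n" "\<lambda>w. marg P n {w}"] by simp
  also have "\<dots> = marg P n (words n - M) + marg P n M"
    using marg_sum[OF assms(1), of "words n - M" n] marg_sum[OF assms(1) assms(2)] by simp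
  finally show ?thesis using marg_words[OF assms(1)] by simp
qed



lemma ergodic_process_process: "ergodic_process P \<Longrightarrow> process P"
  unfolding ergodic_process_def by simp

lemma shift_inv_measure:
  fixes P :: "(int \<Rightarrow> 'a::finite) measure"
  assumes "ergodic_process P"
  shows "measure P {x\<in>space P. map (\<lambda>i. x (int (s+i))) [0..<k] \<in> B} = marg P k B"
proof (induction s)
  case 0
  then show ?case unfolding marg_def by simp
next
  case (Suc s)
  have pr: "process P" using assms by (rule ergodic_process_process)
  have sm: "shift \<in> measurable P P" and d: "distr P P shift = P"
    using assms unfolding ergodic_process_def by auto
  let ?S = "{x\<in>space P. map (\<lambda>i. x (int (s+i))) [0..<k] \<in> B}"
  have Ssets: "?S \<in> sets P" using process_list_sets[OF pr, of "\<lambda>i. int (s+i)" k B] .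
  have eq: "{x\<in>space P. map (\<lambda>i. x (int (Suc s+i))) [0..<k] \<in> B} = shift -` ?S \<inter> space P"
  proof -
    have meq: "map (\<lambda>i. x (int (Suc s+i))) [0..<k] = map (\<lambda>i. shift x (int (s+i))) [0..<k]" for x :: "int \<Rightarrow> 'a"
      unfolding shift_def by (intro map_cong refl) (simp add: add_ac)
    show ?thesis using process_space[OF pr] by (simp only: meq) auto
  qed
  have "measure P (shift -` ?S \<inter> space P) = measure (distr P P shift) ?S"
    using measure_distr[OF sm Ssets] by simp
  also have "\<dots> = measure P ?S" using d by simp
  finally show ?case using eq Suc.IH by simp
qed

lemma take_drop_restr:
  assumes "s + k \<le> n"
  shows "take k (drop s (map g [0..<n])) = map (\<lambda>i. g (s+i)) [0..<k]"
proof -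
  have "take k (drop s (map g [0..<n])) = map g [s..<s+k]"
    using assms by (simp add: drop_map take_map)
  also have "\<dots> = map (\<lambda>i. g (s+i)) [0..<k]"
    by (rule nth_equalityI) auto
  finally show ?thesis .
qed

lemma block_marg:
  fixes P :: "(int \<Rightarrow> 'a::finite) measure"
  assumes "ergodic_process P" "s + k \<le> n"
  shows "marg P n {w\<in>words n. take k (drop s w) \<in> B} = marg P k B"
proof -
  have "{x \<in> space P. map (\<lambda>i. x (int i)) [0..<n] \<in> {w\<in>words n. take k (drop s w) \<in> B}}
      = {x\<in>space P. map (\<lambda>i. x (int (s+i))) [0..<k] \<in> B}"
  proof -
    have te: "take k (drop s (map (\<lambda>i. x (int i)) [0..<n])) = map (\<lambda>i. x (int (s+i))) [0..<k]" for x :: "int \<Rightarrow> 'a"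
      by (rule take_drop_restr[OF assms(2)])
    show ?thesis by (simp add: words_def te)
  qed
  then show ?thesis using shift_inv_measure[OF assms(1)] unfolding marg_def by simp
qed

lemma words_append_image: "words (a+b) = (\<lambda>(x,y). x @ y) ` (words a \<times> words b)"
proof (rule set_eqI, rule iffI)
  fix v :: "'a list" assume "v \<in> words (a+b)"
  then have "(take a v, drop a v) \<in> words a \<times> words b" by (auto simp: words_def)
  moreover have "v = (\<lambda>(x,y). x @ y) (take a v, drop a v)" by simp
  ultimately show "v \<in> (\<lambda>(x,y). x @ y) ` (words a \<times> words b)" by (rule rev_image_eqI)
qed (auto simp: words_def)

lemma inj_append_words: "inj_on (\<lambda>(x,y). x @ y) (words a \<times> words b)"
proof (rule inj_onI)
  fix p q assume "p \<in> words a \<times> words b" "q \<in> words a \<times> words b" "(\<lambda>(x,y). x@y) p = (\<lambda>(x,y). x@y) q"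
  then show "p = q" by (cases p, cases q) (simp add: words_def append_eq_append_conv)
qed

lemma sum_words_split:
  fixes f g :: "'a list \<Rightarrow> real"
  shows "(\<Sum>v\<in>words (a+b). f (take a v) * g (drop a v)) = (\<Sum>x\<in>words a. f x) * (\<Sum>y\<in>words b. g y)"
proof -
  have "(\<Sum>v\<in>words (a+b). f (take a v) * g (drop a v))
      = (\<Sum>v\<in>(\<lambda>(x,y). x @ y) ` (words a \<times> words b). f (take a v) * g (drop a v))"
    by (simp only: words_append_image)
  also have "\<dots> = (\<Sum>xy\<in>words a \<times> words b. f (fst xy) * g (snd xy))"
    by (subst sum.reindex[OF inj_append_words]) (auto simp: words_def intro!: sum.cong)
  also have "\<dots> = (\<Sum>x\<in>words a. \<Sum>y\<in>words b. f x * g y)"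
    by (simp add: sum.cartesian_product case_prod_beta)
  also have "\<dots> = (\<Sum>x\<in>words a. f x) * (\<Sum>y\<in>words b. g y)"
    by (simp add: sum_product)
  finally show ?thesis .
qed

definition blk :: "nat \<Rightarrow> 'a list \<Rightarrow> nat \<Rightarrow> 'a list" where
  "blk k w j = take k (drop (j*k) w)"

definition Ptm :: "(int \<Rightarrow> 'a::finite) measure \<Rightarrow> nat \<Rightarrow> nat \<Rightarrow> nat \<Rightarrow> 'a list \<Rightarrow> real" where
  "Ptm P k m r w = (\<Prod>j<m. marg P k {blk k w j}) * (1 / real CARD('a)) ^ r"

lemma Ptm_sum:
  fixes P :: "(int \<Rightarrow> 'a::finite) measure"
  assumes "process P"
  shows "(\<Sum>v\<in>words (m*k + r). Ptm P k m r v) = 1"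
proof (induction m)
  case 0
  have "(\<Sum>v\<in>(words r :: 'a list set). (1 / real CARD('a)) ^ r) = 1"
    by (simp add: card_words power_one_over)
  then show ?case by (simp add: Ptm_def)
next
  case (Suc m)
  have bs: "blk k v (Suc j) = blk k (drop k v) j" for v :: "'a list" and j
    by (simp add: blk_def add.commute)
  have "(\<Sum>v\<in>words (Suc m*k + r). Ptm P k (Suc m) r v)
     = (\<Sum>v\<in>words (k + (m*k + r)). marg P k {take k v} * Ptm P k m r (drop k v))"
  proof (rule sum.cong)
    show "words (Suc m*k + r) = words (k + (m*k + r))" by (simp add: add.assoc)
    fix v :: "'a list"
    have "(\<Prod>j<Suc m. marg P k {blk k v j}) = marg P k {take k v} * (\<Prod>j<m. marg P k {blk k (drop k v) j})"
      by (simp only: prod.lessThan_Suc_shift bs) (simp add: blk_def)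
    then show "Ptm P k (Suc m) r v = marg P k {take k v} * Ptm P k m r (drop k v)"
      unfolding Ptm_def by simp
  qed
  also have "\<dots> = (\<Sum>x\<in>words k. marg P k {x}) * (\<Sum>y\<in>words (m*k+r). Ptm P k m r y)"
    by (rule sum_words_split)
  also have "\<dots> = 1" using Suc.IH marg_sum_all[OF assms] by simp
  finally show ?case .
qed

lemma Ptm_nonneg: "Ptm P k m r w \<ge> 0"
  unfolding Ptm_def by (intro mult_nonneg_nonneg prod_nonneg) (auto simp: marg_nonneg)



definition Pt :: "(int \<Rightarrow> 'a::finite) measure \<Rightarrow> nat \<Rightarrow> nat \<Rightarrow> 'a list \<Rightarrow> real" where
  "Pt P k n w = Ptm P k (n div k) (n mod k) w"

definition key :: "nat \<Rightarrow> nat \<Rightarrow> 'a list \<Rightarrow> 'a list multiset \<times> 'a list" where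
  "key k n w = (mset (map (blk k w) [0..<n div k]), drop ((n div k)*k) w)"

definition cls :: "nat \<Rightarrow> nat \<Rightarrow> 'a list \<Rightarrow> nat" where
  "cls k n w = card {v\<in>words n. key k n v = key k n w}"

definition Nb :: "'a itself \<Rightarrow> nat \<Rightarrow> nat \<Rightarrow> real" where
  "Nb _ k n = real ((n div k + 1)^(CARD('a)^k) * CARD('a)^(n mod k))"

definition U :: "nat \<Rightarrow> nat \<Rightarrow> 'a::finite list \<Rightarrow> real" where
  "U k n w = 1 / (Nb TYPE('a) k n * real (cls k n w))"

lemma Pt_sum:
  fixes P :: "(int \<Rightarrow> 'a::finite) measure"
  assumes "process P"
  shows "(\<Sum>v\<in>words n. Pt P k n v) = 1"
proof -
  have "n = (n div k)*k + n mod k" by simp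
  then have "words n = (words ((n div k)*k + n mod k) :: 'a list set)" by simp
  then show ?thesis unfolding Pt_def using Ptm_sum[OF assms, where m="n div k" and k=k and r="n mod k"] by simp
qed

lemma Pt_nonneg: "Pt P k n w \<ge> 0" unfolding Pt_def by (rule Ptm_nonneg)

lemma Pt_key:
  assumes "key k n v = key k n w"
  shows "Pt P k n v = Pt P k n w"
proof -
  have e: "(\<Prod>j<m. marg P k {blk k x j}) = prod_mset (image_mset (\<lambda>b. marg P k {b}) (mset (map (blk k x) [0..<m])))"
    for x :: "'a list" and m
  proof -
    have "(\<Prod>j<m. marg P k {blk k x j}) = (\<Prod>j\<in>set [0..<m]. marg P k {blk k x j})"
      by (simp add: atLeast0LessThan)
    also have "\<dots> = prod_list (map (\<lambda>j. marg P k {blk k x j}) [0..<m])"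
      by (rule prod.distinct_set_conv_list) simp
    also have "\<dots> = prod_list (map (\<lambda>b. marg P k {b}) (map (blk k x) [0..<m]))"
      by (simp only: map_map comp_def)
    also have "\<dots> = prod_mset (mset (map (\<lambda>b. marg P k {b}) (map (blk k x) [0..<m])))"
      by (rule prod_mset_prod_list[symmetric])
    also have "\<dots> = prod_mset (image_mset (\<lambda>b. marg P k {b}) (mset (map (blk k x) [0..<m])))"
      by (simp only: mset_map)
    finally show ?thesis .
  qed
  have "mset (map (blk k v) [0..<n div k]) = mset (map (blk k w) [0..<n div k])"
    using assms unfolding key_def by simp
  then show ?thesis unfolding Pt_def Ptm_def by (simp only: e)
qed

lemma cls_pos:
  fixes w :: "'a::finite list"
  assumes "w \<in> words n" shows "cls k n w \<ge> 1"
proof -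
  have "w \<in> {v\<in>words n. key k n v = key k n w}" using assms by simp
  moreover have "finite {v\<in>words n. key k n v = key k n w}" by (rule finite_subset[OF _ finite_words]) auto
  ultimately have "card {v\<in>words n. key k n v = key k n w} > 0" by (metis card_gt_0_iff empty_iff)
  then show ?thesis unfolding cls_def by simp
qed

lemma Pt_cls:
  fixes P :: "(int \<Rightarrow> 'a::finite) measure"
  assumes "process P" "w \<in> words n"
  shows "Pt P k n w * real (cls k n w) \<le> 1"
proof -
  let ?C = "{v\<in>words n. key k n v = key k n w}"
  have "(\<Sum>v\<in>?C. Pt P k n v) = (\<Sum>v\<in>?C. Pt P k n w)"
    by (rule sum.cong[OF refl]) (rule Pt_key, simp)
  then have "Pt P k n w * real (cls k n w) = (\<Sum>v\<in>?C. Pt P k n v)"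
    unfolding cls_def by simp
  also have "\<dots> \<le> (\<Sum>v\<in>words n. Pt P k n v)"
    by (rule sum_mono2) (auto simp: Pt_nonneg)
  also have "\<dots> = 1" by (rule Pt_sum[OF assms(1)])
  finally show ?thesis .
qed

lemma sum_inv_cls:
  "(\<Sum>w\<in>(words n :: 'a::finite list set). 1 / real (cls k n w)) = real (card (key k n ` (words n :: 'a list set)))"
proof -
  have "(\<Sum>w\<in>(words n :: 'a list set). 1 / real (cls k n w))
     = (\<Sum>y\<in>key k n ` (words n :: 'a list set). \<Sum>w\<in>{x. x \<in> words n \<and> key k n x = y}. 1 / real (cls k n w))"
    by (rule sum.image_gen[OF finite_words])
  also have "\<dots> = (\<Sum>y\<in>key k n ` (words n :: 'a list set). 1)"
  proof (rule sum.cong[OF refl])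
    fix y assume "y \<in> key k n ` (words n :: 'a list set)"
    then obtain w0 where w0: "w0 \<in> words n" "y = key k n w0" by blast
    have "(\<Sum>w\<in>{x. x \<in> words n \<and> key k n x = y}. 1 / real (cls k n w))
        = (\<Sum>w\<in>{x. x \<in> words n \<and> key k n x = y}. 1 / real (card {x. x \<in> words n \<and> key k n x = y}))"
      by (rule sum.cong) (auto simp: cls_def)
    also have "\<dots> = 1"
      using cls_pos[OF w0(1), of k] w0 unfolding cls_def by auto
    finally show "(\<Sum>w\<in>{x. x \<in> words n \<and> key k n x = y}. 1 / real (cls k n w)) = 1" .
  qed
  finally show ?thesis by simp
qed

lemma blk_words:
  fixes w :: "'a list"
  assumes "w \<in> words n" "j < n div k"
  shows "blk k w j \<in> words k"
proof -
  have "(j+1)*k \<le> (n div k)*k" using assms(2) by (intro mult_right_mono) auto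
  also have "\<dots> \<le> n" by simp
  finally have "j*k + k \<le> n" by simp
  then show ?thesis using assms(1) unfolding blk_def words_def by simp
qed

lemma card_ms:
  fixes S :: "'b set"
  assumes "finite S"
  shows "finite {M. set_mset M \<subseteq> S \<and> size M = m} \<and> card {M. set_mset M \<subseteq> S \<and> size M = m} \<le> (m+1)^(card S)"
proof -
  let ?MS = "{M. set_mset M \<subseteq> S \<and> size M = m}"
  let ?f = "\<lambda>M. restrict (count M) S"
  have inj: "inj_on ?f ?MS"
  proof (rule inj_onI)
    fix M M' assume M: "M \<in> ?MS" and M': "M' \<in> ?MS" and e: "?f M = ?f M'"
    show "M = M'"
    proof (rule multiset_eqI)
      fix x show "count M x = count M' x"
      proof (cases "x \<in> S")
        case True then show ?thesis using fun_cong[OF e, of x] by simp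
      next
        case False
        then have "x \<notin># M" "x \<notin># M'" using M M' by auto
        then show ?thesis by (simp add: not_in_iff)
      qed
    qed
  qed
  have sub: "?f ` ?MS \<subseteq> PiE S (\<lambda>_. {0..m})"
  proof
    fix g assume "g \<in> ?f ` ?MS"
    then obtain M where M: "M \<in> ?MS" "g = ?f M" by blast
    have "count M x \<le> m" for x using count_le_size[of M x] M(1) by simp
    then show "g \<in> PiE S (\<lambda>_. {0..m})" using M(2) by auto
  qed
  have fin: "finite (PiE S (\<lambda>_. {0..m}))" using assms by (intro finite_PiE) auto
  have "finite ?MS" by (rule inj_on_finite[OF inj sub fin])
  moreover have "card ?MS \<le> card (PiE S (\<lambda>_. {0..m}))" by (rule card_inj_on_le[OF inj sub fin])
  moreover have "card (PiE S (\<lambda>_. {0..m})) = (m+1)^(card S)" using assms by (simp add: card_PiE)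
  ultimately show ?thesis by simp
qed

lemma card_keys:
  assumes "k \<ge> 1"
  shows "card (key k n ` (words n :: 'a::finite list set)) \<le> (n div k + 1)^(CARD('a)^k) * CARD('a)^(n mod k)"
proof -
  let ?m = "n div k"
  let ?MS = "{M. set_mset M \<subseteq> (words k :: 'a list set) \<and> size M = ?m}"
  have ms: "finite ?MS" "card ?MS \<le> (?m+1)^(card (words k :: 'a list set))"
    using card_ms[OF finite_words, of k ?m] by auto
  have sub: "key k n ` (words n :: 'a list set) \<subseteq> ?MS \<times> words (n mod k)"
  proof
    fix y assume "y \<in> key k n ` (words n :: 'a list set)"
    then obtain w :: "'a list" where w: "w \<in> words n" "y = key k n w" by blast
    have "set_mset (mset (map (blk k w) [0..<?m])) \<subseteq> words k"
      using blk_words[OF w(1)] by auto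
    moreover have "length (drop (?m*k) w) = n mod k"
      using w(1) by (simp add: words_def minus_div_mult_eq_mod)
    ultimately show "y \<in> ?MS \<times> words (n mod k)"
      using w(2) by (simp add: key_def words_def)
  qed
  have "card (key k n ` (words n :: 'a list set)) \<le> card (?MS \<times> (words (n mod k) :: 'a list set))"
    by (rule card_mono[OF _ sub]) (simp add: ms(1))
  also have "\<dots> = card ?MS * card (words (n mod k) :: 'a list set)" by (rule card_cartesian_product)
  also have "\<dots> \<le> (?m+1)^(CARD('a)^k) * CARD('a)^(n mod k)"
    using ms(2) by (simp add: card_words)
  finally show ?thesis .
qed

lemma Nb_pos: "Nb TYPE('a::finite) k n > 0"
  unfolding Nb_def by simp

lemma U_sum:
  assumes "k \<ge> 1"
  shows "(\<Sum>w\<in>(words n :: 'a::finite list set). U k n w) \<le> 1"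
proof -
  have "(\<Sum>w\<in>(words n :: 'a list set). U k n w) = (\<Sum>w\<in>(words n :: 'a list set). 1 / real (cls k n w)) / Nb TYPE('a) k n"
    unfolding U_def sum_divide_distrib by (rule sum.cong) (simp_all add: mult.commute)
  also have "\<dots> = real (card (key k n ` (words n :: 'a list set))) / Nb TYPE('a) k n"
    by (simp only: sum_inv_cls)
  also have "\<dots> \<le> 1"
    using card_keys[OF assms, of n, where 'a='a] Nb_pos[of k n, where 'a='a]
    by (simp add: Nb_def del: of_nat_power of_nat_mult)
  finally show ?thesis .
qed

lemma U_nonneg: "U k n w \<ge> 0" unfolding U_def Nb_def by simp

lemma U_ge:
  fixes P :: "(int \<Rightarrow> 'a::finite) measure"
  assumes "process P" "w \<in> words n"
  shows "U k n w \<ge> Pt P k n w / Nb TYPE('a) k n"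
proof -
  have c: "real (cls k n w) \<ge> 1" using cls_pos[OF assms(2)] by simp
  have N: "Nb TYPE('a) k n > 0" by (rule Nb_pos)
  have "Pt P k n w * real (cls k n w) \<le> 1" by (rule Pt_cls[OF assms])
  then show ?thesis unfolding U_def using c N by (simp add: field_simps)
qed



abbreviation pw :: "(int \<Rightarrow> 'a) measure \<Rightarrow> nat \<Rightarrow> 'a list \<Rightarrow> real" where
  "pw P n w \<equiv> marg P n {w}"

definition Hn :: "(int \<Rightarrow> 'a::finite) measure \<Rightarrow> nat \<Rightarrow> real" where
  "Hn P n = (\<Sum>w\<in>words n. - (pw P n w * ln (pw P n w)))"

lemma group_blk:
  fixes P :: "(int \<Rightarrow> 'a::finite) measure"
  assumes "ergodic_process P" "s + k \<le> n"
  shows "(\<Sum>w\<in>words n. pw P n w * f (take k (drop s w))) = (\<Sum>b\<in>words k. pw P k b * f b)"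
proof -
  have pr: "process P" using assms(1) by (rule ergodic_process_process)
  let ?g = "\<lambda>w::'a list. take k (drop s w)"
  have img: "?g ` words n \<subseteq> words k" using assms(2) by (auto simp: words_def)
  have "(\<Sum>w\<in>words n. pw P n w * f (?g w)) = (\<Sum>b\<in>words k. \<Sum>w\<in>{x. x \<in> words n \<and> ?g x = b}. pw P n w * f (?g w))"
    by (rule sum.group[OF finite_words finite_words img, symmetric])
  also have "\<dots> = (\<Sum>b\<in>words k. (\<Sum>w\<in>{x. x \<in> words n \<and> ?g x = b}. pw P n w) * f b)"
    by (rule sum.cong[OF refl]) (simp add: sum_distrib_right)
  also have "\<dots> = (\<Sum>b\<in>words k. pw P k b * f b)"
  proof (rule sum.cong[OF refl])
    fix b :: "'a list" assume "b \<in> words k"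
    have "(\<Sum>w\<in>{x. x \<in> words n \<and> ?g x = b}. pw P n w) = marg P n {x. x \<in> words n \<and> ?g x = b}"
      by (rule marg_sum[OF pr, symmetric]) auto
    also have "\<dots> = marg P n {w \<in> words n. ?g w \<in> {b}}" by simp
    also have "\<dots> = pw P k b" by (rule block_marg[OF assms])
    finally show "(\<Sum>w\<in>{x. x \<in> words n \<and> ?g x = b}. pw P n w) * f b = pw P k b * f b" by simp
  qed
  finally show ?thesis .
qed

lemma pw_le_block:
  fixes P :: "(int \<Rightarrow> 'a::finite) measure"
  assumes "ergodic_process P" "s + k \<le> n" "w \<in> words n"
  shows "pw P n w \<le> pw P k (take k (drop s w))"
proof -
  have pr: "process P" using assms(1) by (rule ergodic_process_process)
  have "pw P n w \<le> marg P n {v \<in> words n. take k (drop s v) \<in> {take k (drop s w)}}"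
    by (rule marg_mono[OF pr]) (use assms(3) in auto)
  also have "\<dots> = pw P k (take k (drop s w))" by (rule block_marg[OF assms(1,2)])
  finally show ?thesis .
qed

lemma blk_fits:
  fixes j n k :: nat
  assumes "j < n div k"
  shows "j*k + k \<le> n"
proof -
  have "(j+1)*k \<le> (n div k)*k" using assms by (intro mult_right_mono) auto
  also have "\<dots> \<le> n" by simp
  finally show ?thesis by simp
qed

lemma Pt_pos:
  fixes P :: "(int \<Rightarrow> 'a::finite) measure"
  assumes "ergodic_process P" "w \<in> words n" "pw P n w > 0"
  shows "Pt P k n w > 0"
proof -
  have "marg P k {blk k w j} > 0" if "j < n div k" for j
    using pw_le_block[OF assms(1) blk_fits[OF that] assms(2)] assms(3) unfolding blk_def by simp
  then show ?thesis unfolding Pt_def Ptm_def by (intro mult_pos_pos prod_pos) auto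
qed

lemma ln_Pt:
  fixes P :: "(int \<Rightarrow> 'a::finite) measure"
  assumes "ergodic_process P" "w \<in> words n" "pw P n w > 0"
  shows "- ln (Pt P k n w) = (\<Sum>j<n div k. - ln (pw P k (blk k w j))) + real (n mod k) * ln (real CARD('a))"
proof -
  have pos: "marg P k {blk k w j} > 0" if "j < n div k" for j
    using pw_le_block[OF assms(1) blk_fits[OF that] assms(2)] assms(3) unfolding blk_def by simp
  have "ln (Pt P k n w) = ln (\<Prod>j<n div k. marg P k {blk k w j}) + ln ((1 / real CARD('a)) ^ (n mod k))"
    unfolding Pt_def Ptm_def by (rule ln_mult_pos) (auto intro!: prod_pos pos)
  also have "ln (\<Prod>j<n div k. marg P k {blk k w j}) = (\<Sum>j<n div k. ln (marg P k {blk k w j}))"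
    by (rule ln_prod) (use pos in force)+
  also have "ln ((1 / real CARD('a)) ^ (n mod k)) = - (real (n mod k) * ln (real CARD('a)))"
    by (simp add: ln_realpow ln_div)
  finally show ?thesis by (simp add: sum_negf)
qed

lemma Hn_nonneg:
  fixes P :: "(int \<Rightarrow> 'a::finite) measure"
  assumes "process P"
  shows "Hn P n \<ge> 0"
  unfolding Hn_def
proof (rule sum_nonneg)
  fix w :: "'a list"
  have "0 \<le> pw P n w" "pw P n w \<le> 1" using marg_nonneg marg_le1[OF assms] by auto
  then show "0 \<le> - (pw P n w * ln (pw P n w))"
    by (cases "pw P n w = 0") (auto simp: mult_nonneg_nonpos)
qed

lemma expect_ln_Pt:
  fixes P :: "(int \<Rightarrow> 'a::finite) measure"
  assumes "ergodic_process P"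
  shows "(\<Sum>w\<in>words n. pw P n w * (- ln (Pt P k n w))) = real (n div k) * Hn P k + real (n mod k) * ln (real CARD('a))"
proof -
  have pr: "process P" using assms(1) by (rule ergodic_process_process)
  have "(\<Sum>w\<in>words n. pw P n w * (- ln (Pt P k n w)))
      = (\<Sum>w\<in>words n. pw P n w * ((\<Sum>j<n div k. - ln (pw P k (blk k w j))) + real (n mod k) * ln (real CARD('a))))"
  proof (rule sum.cong[OF refl])
    fix w :: "'a list" assume w: "w \<in> words n"
    show "pw P n w * (- ln (Pt P k n w)) = pw P n w * ((\<Sum>j<n div k. - ln (pw P k (blk k w j))) + real (n mod k) * ln (real CARD('a)))"
    proof (cases "pw P n w > 0")
      case True then show ?thesis using ln_Pt[OF assms w True] by simp
    next
      case False then have "pw P n w = 0" using marg_nonneg[of P n "{w}"] by simp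
      then show ?thesis by simp
    qed
  qed
  also have "\<dots> = (\<Sum>j<n div k. \<Sum>w\<in>words n. pw P n w * (- ln (pw P k (blk k w j))))
                 + (\<Sum>w\<in>words n. pw P n w) * (real (n mod k) * ln (real CARD('a)))"
    by (simp add: distrib_left sum.distrib sum_distrib_left sum_distrib_right sum.swap[of _ "{..<n div k}"])
  also have "(\<Sum>w\<in>words n. pw P n w) = 1" by (rule marg_sum_all[OF pr])
  also have "(\<Sum>j<n div k. \<Sum>w\<in>words n. pw P n w * (- ln (pw P k (blk k w j)))) = (\<Sum>j<n div k. Hn P k)"
  proof (rule sum.cong[OF refl])
    fix j assume "j \<in> {..<n div k}"
    then have "j*k + k \<le> n" using blk_fits by simp
    then show "(\<Sum>w\<in>words n. pw P n w * (- ln (pw P k (blk k w j)))) = Hn P k"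
      unfolding blk_def Hn_def using group_blk[OF assms, of "j*k" k n "\<lambda>b. - ln (pw P k b)"] by simp
  qed
  finally show ?thesis by simp
qed



definition R :: "nat \<Rightarrow> 'a::finite list \<Rightarrow> real" where
  "R n w = (\<Sum>k\<in>{1..n}. U k n w) / real n"

lemma R_nonneg: "R n w \<ge> 0"
  unfolding R_def by (intro divide_nonneg_nonneg sum_nonneg U_nonneg) auto

lemma R_sum: "(\<Sum>w\<in>(words n :: 'a::finite list set). R n w) \<le> 1"
proof (cases "n = 0")
  case True then show ?thesis by (simp add: R_def)
next
  case False
  have "(\<Sum>w\<in>(words n :: 'a list set). R n w) = (\<Sum>k\<in>{1..n}. \<Sum>w\<in>(words n :: 'a list set). U k n w) / real n"
    unfolding R_def sum_divide_distrib[symmetric] by (simp only: sum.swap[of _ "{1..n}"])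
  also have "\<dots> \<le> (\<Sum>k\<in>{1..n}. 1) / real n"
    by (intro divide_right_mono sum_mono U_sum) auto
  also have "\<dots> = 1" using False by simp
  finally show ?thesis .
qed

lemma R_ge:
  fixes P :: "(int \<Rightarrow> 'a::finite) measure"
  assumes "process P" "w \<in> words n" "1 \<le> k" "k \<le> n"
  shows "R n w \<ge> Pt P k n w / (Nb TYPE('a) k n * real n)"
proof -
  have n: "real n > 0" using assms(3,4) by simp
  have "Pt P k n w / (Nb TYPE('a) k n * real n) = (Pt P k n w / Nb TYPE('a) k n) / real n" by simp
  also have "\<dots> \<le> U k n w / real n"
    by (rule divide_right_mono[OF U_ge[OF assms(1,2)]]) simp
  also have "\<dots> \<le> (\<Sum>k\<in>{1..n}. U k n w) / real n"
    by (rule divide_right_mono[OF member_le_sum]) (use assms(3,4) U_nonneg in auto)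
  finally show ?thesis unfolding R_def .
qed

lemma R_pos:
  fixes P :: "(int \<Rightarrow> 'a::finite) measure"
  assumes "ergodic_process P" "w \<in> words n" "pw P n w > 0" "n \<ge> 1"
  shows "R n w > 0"
proof -
  have pr: "process P" using assms(1) by (rule ergodic_process_process)
  have "0 < Pt P 1 n w / (Nb TYPE('a) 1 n * real n)"
    using Pt_pos[OF assms(1-3), of 1] Nb_pos[of 1 n, where 'a='a] assms(4) by simp
  also have "\<dots> \<le> R n w" by (rule R_ge[OF pr assms(2)]) (use assms(4) in auto)
  finally show ?thesis .
qed

definition Zsum :: "(int \<Rightarrow> 'a::finite) measure \<Rightarrow> nat \<Rightarrow> real" where
  "Zsum P n = (\<Sum>w\<in>words n. if pw P n w > 0 then pw P n w * ln (pw P n w / R n w) else 0)"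

lemma ln_Nb: "ln (Nb TYPE('a::finite) k n) = real (CARD('a)^k) * ln (real (n div k + 1)) + real (n mod k) * ln (real CARD('a))"
proof -
  have "Nb TYPE('a) k n = real (n div k + 1) ^ (CARD('a)^k) * real CARD('a) ^ (n mod k)"
    unfolding Nb_def by simp
  then show ?thesis by (simp add: ln_mult_pos ln_realpow)
qed

lemma Zsum_bound:
  fixes P :: "(int \<Rightarrow> 'a::finite) measure"
  assumes "ergodic_process P" "1 \<le> k" "k \<le> n"
  shows "Zsum P n \<le> - Hn P n + (real (n div k) * Hn P k + real (n mod k) * ln (real CARD('a)))
                    + ln (Nb TYPE('a) k n * real n)"
proof -
  have pr: "process P" using assms(1) by (rule ergodic_process_process)
  have N: "Nb TYPE('a) k n * real n > 0" using Nb_pos[of k n, where 'a='a] assms(2,3) by simp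
  have tm: "(if pw P n w > 0 then pw P n w * ln (pw P n w / R n w) else 0)
      \<le> pw P n w * ln (pw P n w) + pw P n w * (- ln (Pt P k n w)) + pw P n w * ln (Nb TYPE('a) k n * real n)"
    if w: "w \<in> words n" for w
  proof (cases "pw P n w > 0")
    case True
    have Ptp: "Pt P k n w > 0" by (rule Pt_pos[OF assms(1) w True])
    have Rp: "R n w > 0" by (rule R_pos[OF assms(1) w True]) (use assms in simp)
    have "ln (Pt P k n w / (Nb TYPE('a) k n * real n)) \<le> ln (R n w)"
      using R_ge[OF pr w assms(2,3)] Ptp N Rp by (subst ln_le_cancel_iff) auto
    then have "ln (Pt P k n w) - ln (Nb TYPE('a) k n * real n) \<le> ln (R n w)"
      using Ptp N by (simp add: ln_divide_pos)
    then have "ln (pw P n w / R n w) \<le> ln (pw P n w) - ln (Pt P k n w) + ln (Nb TYPE('a) k n * real n)"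
      using True Rp by (simp add: ln_divide_pos)
    then have "pw P n w * ln (pw P n w / R n w) \<le> pw P n w * (ln (pw P n w) - ln (Pt P k n w) + ln (Nb TYPE('a) k n * real n))"
      using True by (intro mult_left_mono) auto
    then show ?thesis using True by (simp add: algebra_simps)
  next
    case False
    then have "pw P n w = 0" using marg_nonneg[of P n "{w}"] by simp
    then show ?thesis by simp
  qed
  have "Zsum P n \<le> (\<Sum>w\<in>words n. pw P n w * ln (pw P n w) + pw P n w * (- ln (Pt P k n w)) + pw P n w * ln (Nb TYPE('a) k n * real n))"
    unfolding Zsum_def by (rule sum_mono) (rule tm)
  also have "\<dots> = (\<Sum>w\<in>words n. pw P n w * ln (pw P n w)) + (\<Sum>w\<in>words n. pw P n w * (- ln (Pt P k n w)))
                 + (\<Sum>w\<in>words n. pw P n w) * ln (Nb TYPE('a) k n * real n)"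
    by (simp add: sum.distrib sum_distrib_right sum_subtractf sum_negf)
  also have "(\<Sum>w\<in>words n. pw P n w) = 1" by (rule marg_sum_all[OF pr])
  also have "(\<Sum>w\<in>words n. pw P n w * ln (pw P n w)) = - Hn P n"
    unfolding Hn_def by (simp add: sum_negf)
  also have "(\<Sum>w\<in>words n. pw P n w * (- ln (Pt P k n w))) = real (n div k) * Hn P k + real (n mod k) * ln (real CARD('a))"
    by (rule expect_ln_Pt[OF assms(1)])
  finally show ?thesis by simp
qed

definition Bset :: "(int \<Rightarrow> 'a::finite) measure \<Rightarrow> real \<Rightarrow> nat \<Rightarrow> 'a list set" where
  "Bset P \<eta> n = {w\<in>words n. pw P n w > 0 \<and> R n w < pw P n w * exp (- (real n * \<eta>))}"

lemma markov_B:
  fixes P :: "(int \<Rightarrow> 'a::finite) measure"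
  assumes "ergodic_process P" "n \<ge> 1"
  shows "real n * \<eta> * marg P n (Bset P \<eta> n) \<le> Zsum P n + 1"
proof -
  have pr: "process P" using assms(1) by (rule ergodic_process_process)
  have tm: "(if w \<in> Bset P \<eta> n then pw P n w * (real n * \<eta>) else 0)
      \<le> (if pw P n w > 0 then pw P n w * ln (pw P n w / R n w) else 0) + R n w"
    if w: "w \<in> words n" for w
  proof (cases "pw P n w > 0")
    case True
    have Rp: "R n w > 0" by (rule R_pos[OF assms(1) w True assms(2)])
    show ?thesis
    proof (cases "w \<in> Bset P \<eta> n")
      case True2: True
      then have "R n w < pw P n w * exp (- (real n * \<eta>))" unfolding Bset_def by simp
      then have "R n w * exp (real n * \<eta>) < pw P n w * exp (- (real n * \<eta>)) * exp (real n * \<eta>)"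
        by (rule mult_strict_right_mono) simp
      also have "pw P n w * exp (- (real n * \<eta>)) * exp (real n * \<eta>) = pw P n w"
        by (simp add: exp_minus)
      finally have "exp (real n * \<eta>) < pw P n w / R n w"
        by (simp add: pos_less_divide_eq[OF Rp] mult.commute)
      moreover have "pw P n w / R n w > 0" using Rp True by simp
      ultimately have "ln (exp (real n * \<eta>)) < ln (pw P n w / R n w)"
        by (subst ln_less_cancel_iff) simp_all
      then have "real n * \<eta> < ln (pw P n w / R n w)" by simp
      then have "pw P n w * (real n * \<eta>) \<le> pw P n w * ln (pw P n w / R n w)"
        using True by (intro mult_left_mono) auto
      then have "pw P n w * (real n * \<eta>) \<le> pw P n w * ln (pw P n w / R n w) + R n w"
        using R_nonneg[of n w] by linarith
      then show ?thesis using True2 True by simp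
    next
      case False
      have "ln (R n w / pw P n w) \<le> R n w / pw P n w - 1" by (rule ln_le_minus_one) (use Rp True in simp)
      moreover have "ln (pw P n w / R n w) = - ln (R n w / pw P n w)" using Rp True by (simp add: ln_divide_pos)
      ultimately have "pw P n w * ln (pw P n w / R n w) \<ge> pw P n w * (1 - R n w / pw P n w)"
        using True by (intro mult_left_mono) auto
      also have "pw P n w * (1 - R n w / pw P n w) = pw P n w - R n w" using True by (simp add: field_simps)
      finally show ?thesis using False True by simp
    qed
  next
    case False
    then have "w \<notin> Bset P \<eta> n" unfolding Bset_def by simp
    then show ?thesis using False R_nonneg[of n w] by simp
  qed
  have Bsub: "Bset P \<eta> n \<subseteq> words n" unfolding Bset_def by auto
  have "real n * \<eta> * marg P n (Bset P \<eta> n) = (\<Sum>w\<in>Bset P \<eta> n. pw P n w * (real n * \<eta>))"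
    unfolding marg_sum[OF pr Bsub] sum_distrib_left by (rule sum.cong) simp_all
  also have "\<dots> = (\<Sum>w\<in>words n. if w \<in> Bset P \<eta> n then pw P n w * (real n * \<eta>) else 0)"
    using sum.inter_restrict[OF finite_words, of "\<lambda>w. pw P n w * (real n * \<eta>)" n "Bset P \<eta> n"] Bsub
    by (simp add: Int_absorb1)
  also have "\<dots> \<le> (\<Sum>w\<in>words n. (if pw P n w > 0 then pw P n w * ln (pw P n w / R n w) else 0) + R n w)"
    by (rule sum_mono) (rule tm)
  also have "\<dots> = Zsum P n + (\<Sum>w\<in>(words n :: 'a list set). R n w)"
    unfolding Zsum_def by (simp add: sum.distrib)
  also have "\<dots> \<le> Zsum P n + 1" using R_sum[of n, where 'a='a] by simp
  finally show ?thesis .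
qed



lemma ln_Suc_le: "n \<ge> 1 \<Longrightarrow> ln (real n + 1) \<le> ln (real n) + 1"
proof -
  assume n: "n \<ge> 1"
  have "ln (real n + 1) \<le> ln (2 * real n)" using n by (subst ln_le_cancel_iff) auto
  also have "\<dots> = ln 2 + ln (real n)" using n by (simp add: ln_mult_pos)
  also have "ln (2::real) \<le> 1" using ln_le_minus_one[of 2] by simp
  finally show ?thesis by simp
qed

lemma universal:
  fixes P :: "(int \<Rightarrow> 'a::finite) measure"
  assumes erg: "ergodic_process P" and eta: "\<eta> > 0"
  shows "(\<lambda>n. marg P n (Bset P \<eta> n)) \<longlonglongrightarrow> 0"
proof (rule order_tendstoI)
  fix a :: real assume "a < 0"
  then show "eventually (\<lambda>n. a < marg P n (Bset P \<eta> n)) sequentially"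
    using marg_nonneg[of P] by (intro always_eventually) (auto intro: less_le_trans)
next
  fix \<epsilon> :: real assume eps: "\<epsilon> > 0"
  have pr: "process P" using erg by (rule ergodic_process_process)
  define HS where "HS = (\<lambda>j. Hn P j / real j) ` {1..}"
  define hinf where "hinf = Inf HS"
  have HSne: "HS \<noteq> {}" unfolding HS_def by auto
  have HSbdd: "bdd_below HS" unfolding HS_def
    by (rule bdd_belowI[of _ 0]) (auto intro!: divide_nonneg_nonneg Hn_nonneg[OF pr])
  have hle: "real n * hinf \<le> Hn P n" if "n \<ge> 1" for n
  proof -
    have "hinf \<le> Hn P n / real n" unfolding hinf_def
      by (rule cInf_lower[OF _ HSbdd]) (use that in \<open>auto simp: HS_def\<close>)
    then show ?thesis using that by (simp add: field_simps)
  qed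
  have "Inf HS < hinf + \<epsilon> * \<eta> / 2" unfolding hinf_def using eps eta by simp
  from cInf_lessD[OF HSne this] obtain k where k: "k \<ge> 1" "Hn P k / real k < hinf + \<epsilon> * \<eta> / 2"
    unfolding HS_def by auto
  define C where "C = real CARD('a)"
  have C1: "C \<ge> 1" unfolding C_def by simp
  have lnC: "ln C \<ge> 0" using C1 by simp
  define c0 where "c0 = 2 * real k * ln C + C ^ k + 1"
  define c1 where "c1 = C ^ k + 1"
  define d where "d = Hn P k / real k - hinf"
  have d: "d < \<epsilon> * \<eta> / 2" using k(2) unfolding d_def by linarith
  define g where "g n = c0 / \<eta> * (1 / real n) + c1 / \<eta> * (ln (real n) / real n)" for n :: nat
  have "g \<longlonglongrightarrow> c0 / \<eta> * 0 + c1 / \<eta> * 0"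
    unfolding g_def by (intro tendsto_intros lim_ln_over_n)
  then have "g \<longlonglongrightarrow> 0" by simp
  then have ev1: "eventually (\<lambda>n. g n < \<epsilon> / 2) sequentially"
    by (rule order_tendstoD(2)) (use eps in simp)
  have main: "marg P n (Bset P \<eta> n) < \<epsilon>" if n: "n \<ge> k" and gn: "g n < \<epsilon> / 2" for n
  proof -
    have n1: "n \<ge> 1" using n k(1) by simp
    have rn: "real n > 0" using n1 by simp
    have Hk: "Hn P k \<ge> 0" by (rule Hn_nonneg[OF pr])
    have "real n * \<eta> * marg P n (Bset P \<eta> n) \<le> Zsum P n + 1" by (rule markov_B[OF erg n1])
    also have "Zsum P n \<le> - Hn P n + (real (n div k) * Hn P k + real (n mod k) * ln C) + ln (Nb TYPE('a) k n * real n)"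
      using Zsum_bound[OF erg k(1) n] unfolding C_def .
    also have "ln (Nb TYPE('a) k n * real n) = ln (Nb TYPE('a) k n) + ln (real n)"
      using Nb_pos[of k n, where 'a='a] rn by (simp add: ln_mult_pos)
    also have "ln (Nb TYPE('a) k n) = C ^ k * ln (real (n div k + 1)) + real (n mod k) * ln C"
      unfolding ln_Nb C_def by simp
    finally have A: "real n * \<eta> * marg P n (Bset P \<eta> n) \<le>
        - Hn P n + real (n div k) * Hn P k + 2 * (real (n mod k) * ln C) + C ^ k * ln (real (n div k + 1)) + ln (real n) + 1"
      by (simp add: algebra_simps)
    have B1: "- Hn P n \<le> - (real n * hinf)" using hle[OF n1] by simp
    have "n div k * k \<le> n" by (metis div_mult_mod_eq le_add1)
    then have "real (n div k) * real k \<le> real n"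
      by (metis of_nat_le_iff of_nat_mult)
    then have "real (n div k) \<le> real n / real k" using k(1) by (simp add: field_simps)
    then have B2: "real (n div k) * Hn P k \<le> real n * (Hn P k / real k)"
      using Hk by (metis mult_right_mono times_divide_eq_left times_divide_eq_right)
    have "real (n mod k) \<le> real k" using k(1) by simp
    then have B3: "real (n mod k) * ln C \<le> real k * ln C" using lnC by (rule mult_right_mono)
    have "ln (real (n div k + 1)) \<le> ln (real n + 1)"
      by (subst ln_le_cancel_iff) (auto simp: div_le_dividend)
    also have "\<dots> \<le> ln (real n) + 1" by (rule ln_Suc_le[OF n1])
    finally have B4: "C ^ k * ln (real (n div k + 1)) \<le> C ^ k * (ln (real n) + 1)"
      using C1 by (intro mult_left_mono) auto
    have "real n * \<eta> * marg P n (Bset P \<eta> n) \<le> real n * d + c0 + c1 * ln (real n)"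
      using A B1 B2 B3 B4 unfolding d_def c0_def c1_def by (simp add: algebra_simps)
    also have "\<dots> = (d / \<eta> + g n) * (real n * \<eta>)"
      unfolding g_def using rn eta by (simp add: field_simps)
    finally have "marg P n (Bset P \<eta> n) * (real n * \<eta>) \<le> (d / \<eta> + g n) * (real n * \<eta>)"
      by (simp add: mult.commute)
    then have "marg P n (Bset P \<eta> n) \<le> d / \<eta> + g n"
      using rn eta by (simp add: mult_le_cancel_right)
    also have "d / \<eta> < \<epsilon> / 2" using d eta by (simp add: field_simps)
    finally show ?thesis using gn by simp
  qed
  show "eventually (\<lambda>n. marg P n (Bset P \<eta> n) < \<epsilon>) sequentially"
    using ev1 eventually_ge_at_top[of k] by eventually_elim (rule main)
qed



lemma beta_set_finite: "finite {M. M \<subseteq> (words n :: 'a::finite list set) \<and> marg P n M \<ge> 1 - \<epsilon>}"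
  by (rule finite_subset[of _ "Pow (words n)"]) auto

lemma beta_set_ne:
  fixes P :: "(int \<Rightarrow> 'a::finite) measure"
  assumes "process P" "\<epsilon> > 0"
  shows "words n \<in> {M. M \<subseteq> (words n :: 'a list set) \<and> marg P n M \<ge> 1 - \<epsilon>}"
  using marg_words[OF assms(1)] assms(2) by simp

lemma beta_le:
  fixes P :: "(int \<Rightarrow> 'a::finite) measure"
  assumes "M \<subseteq> words n" "marg P n M \<ge> 1 - \<epsilon>"
  shows "beta \<epsilon> n P Q \<le> eln (marg Q n M)"
  unfolding beta_def by (rule Min_le) (use assms beta_set_finite in auto)

lemma beta_ge:
  fixes P Q :: "(int \<Rightarrow> 'a::finite) measure"
  assumes "process P" "\<epsilon> > 0" "c > 0"
    and "\<And>M. M \<subseteq> words n \<Longrightarrow> marg P n M \<ge> 1 - \<epsilon> \<Longrightarrow> marg Q n M \<ge> c"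
  shows "beta \<epsilon> n P Q \<ge> ereal (ln c)"
  unfolding beta_def
proof (subst Min_ge_iff)
  show "finite ((\<lambda>M. eln (marg Q n M)) ` {M. M \<subseteq> (words n :: 'a list set) \<and> marg P n M \<ge> 1 - \<epsilon>})"
    using beta_set_finite by blast
  show "(\<lambda>M. eln (marg Q n M)) ` {M. M \<subseteq> (words n :: 'a list set) \<and> marg P n M \<ge> 1 - \<epsilon>} \<noteq> {}"
    using beta_set_ne[OF assms(1,2)] by blast
  show "\<forall>a\<in>(\<lambda>M. eln (marg Q n M)) ` {M. M \<subseteq> words n \<and> 1 - \<epsilon> \<le> marg P n M}. ereal (ln c) \<le> a"
  proof
    fix a assume "a \<in> (\<lambda>M. eln (marg Q n M)) ` {M. M \<subseteq> words n \<and> 1 - \<epsilon> \<le> marg P n M}"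
    then obtain M where M: "M \<subseteq> words n" "1 - \<epsilon> \<le> marg P n M" "a = eln (marg Q n M)" by blast
    have q: "marg Q n M \<ge> c" using assms(4)[OF M(1,2)] .
    then have "marg Q n M > 0" using assms(3) by simp
    then have "a = ereal (ln (marg Q n M))" using M(3) unfolding eln_def by simp
    moreover have "ln c \<le> ln (marg Q n M)" using q assms(3) by simp
    ultimately show "ereal (ln c) \<le> a" by simp
  qed
qed

definition Sset :: "(int \<Rightarrow> 'a::finite) measure \<Rightarrow> (int \<Rightarrow> 'a) measure \<Rightarrow> real \<Rightarrow> nat \<Rightarrow> 'a list set" where
  "Sset P Q a n = {w\<in>words n. pw Q n w > pw P n w * exp (- (real n * a))}"

lemma Q_big:
  fixes P Q :: "(int \<Rightarrow> 'a::finite) measure"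
  assumes prP: "process P" and prQ: "process Q"
    and M: "M \<subseteq> words n" "marg P n M \<ge> 1 - \<epsilon>"
    and S: "marg P n (Sset P Q a n) \<ge> \<delta>" and e: "\<epsilon> \<le> \<delta> / 2"
  shows "marg Q n M \<ge> \<delta> / 2 * exp (- (real n * a))"
proof -
  let ?S = "Sset P Q a n"
  have Ssub: "?S \<subseteq> words n" unfolding Sset_def by auto
  have "marg P n ?S = (\<Sum>w\<in>?S. pw P n w)" by (rule marg_sum[OF prP Ssub])
  also have "\<dots> = (\<Sum>w\<in>?S \<inter> M. pw P n w) + (\<Sum>w\<in>?S - M. pw P n w)"
    by (rule sum.Int_Diff) (rule finite_subset[OF Ssub finite_words])
  also have "(\<Sum>w\<in>?S - M. pw P n w) = marg P n (?S - M)"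
    by (rule marg_sum[OF prP, symmetric]) (use Ssub in auto)
  also have "marg P n (?S - M) \<le> marg P n (words n - M)"
    by (rule marg_mono[OF prP]) (use Ssub in auto)
  also have "marg P n (words n - M) = 1 - marg P n M" by (rule marg_compl[OF prP M(1)])
  finally have PSM: "(\<Sum>w\<in>?S \<inter> M. pw P n w) \<ge> \<delta> / 2" using S M(2) e by linarith
  have "exp (- (real n * a)) * (\<delta> / 2) \<le> exp (- (real n * a)) * (\<Sum>w\<in>?S \<inter> M. pw P n w)"
    using PSM by (intro mult_left_mono) auto
  also have "\<dots> = (\<Sum>w\<in>?S \<inter> M. pw P n w * exp (- (real n * a)))"
    by (simp add: sum_distrib_left mult.commute)
  also have "\<dots> \<le> (\<Sum>w\<in>?S \<inter> M. pw Q n w)"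
    by (rule sum_mono) (simp add: Sset_def less_imp_le)
  also have "\<dots> = marg Q n (?S \<inter> M)"
    by (rule marg_sum[OF prQ, symmetric]) (use M(1) in auto)
  also have "\<dots> \<le> marg Q n M" by (rule marg_mono[OF prQ]) auto
  finally show ?thesis by (simp add: mult.commute)
qed

lemma ereal_between:
  assumes "ereal a < h"
  obtains b where "a < b" "ereal b < h"
proof (cases h)
  case (real r)
  then show ?thesis using assms that[of "(a + r)/2"] by simp
next
  case PInf
  then show ?thesis using that[of "a + 1"] by simp
next
  case MInf
  then show ?thesis using assms by simp
qed

lemma spectrum:
  fixes P Q :: "(int \<Rightarrow> 'a::finite) measure"
  assumes prP: "process P" and prQ: "process Q"
    and cond: "\<forall>\<epsilon>. 0 < \<epsilon> \<and> \<epsilon> < 1 \<longrightarrow> beta_bar \<epsilon> P Q \<le> - hrate P Q"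
    and a: "ereal a < hrate P Q"
  shows "(\<lambda>n. marg P n (Sset P Q a n)) \<longlonglongrightarrow> 0"
proof (rule order_tendstoI)
  fix x :: real assume "x < 0"
  then show "eventually (\<lambda>n. x < marg P n (Sset P Q a n)) sequentially"
    using marg_nonneg[of P] by (intro always_eventually) (auto intro: less_le_trans)
next
  fix \<delta> :: real assume d: "\<delta> > 0"
  define \<epsilon> where "\<epsilon> = min (\<delta> / 2) (1/2)"
  have e: "0 < \<epsilon>" "\<epsilon> < 1" "\<epsilon> \<le> \<delta> / 2" using d unfolding \<epsilon>_def by auto
  obtain b where b: "a < b" "ereal b < hrate P Q" using ereal_between[OF a] by blast
  have "beta_bar \<epsilon> P Q \<le> - hrate P Q" using cond e by simp
  also have "\<dots> < ereal (- b)" using b(2) by (cases "hrate P Q") auto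
  finally have "Limsup sequentially (\<lambda>n. ereal (1 / real n) * beta \<epsilon> n P Q) < ereal (- b)"
    unfolding beta_bar_def .
  then have ev1: "eventually (\<lambda>n. ereal (1 / real n) * beta \<epsilon> n P Q < ereal (- b)) sequentially"
    by (rule Limsup_lessD)
  have "(\<lambda>n. ln (\<delta> / 2) * (1 / real n)) \<longlonglongrightarrow> ln (\<delta> / 2) * 0"
    by (intro tendsto_intros)
  then have ev2: "eventually (\<lambda>n. ln (\<delta> / 2) * (1 / real n) > a - b) sequentially"
    by (rule order_tendstoD(1)) (use b in simp)
  show "eventually (\<lambda>n. marg P n (Sset P Q a n) < \<delta>) sequentially"
    using ev1 ev2 eventually_ge_at_top[of 1]
  proof eventually_elim
    case (elim n)
    show ?case
    proof (rule ccontr)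
      assume "\<not> marg P n (Sset P Q a n) < \<delta>"
      then have S: "marg P n (Sset P Q a n) \<ge> \<delta>" by simp
      have c: "\<delta> / 2 * exp (- (real n * a)) > 0" using d by simp
      have "beta \<epsilon> n P Q \<ge> ereal (ln (\<delta> / 2 * exp (- (real n * a))))"
        by (rule beta_ge[OF prP e(1) c]) (rule Q_big[OF prP prQ _ _ S e(3)])
      also have "ln (\<delta> / 2 * exp (- (real n * a))) = ln (\<delta> / 2) - real n * a"
        using d by (subst ln_mult_pos) simp_all
      finally have "ereal (1 / real n) * ereal (ln (\<delta> / 2) - real n * a) \<le> ereal (1 / real n) * beta \<epsilon> n P Q"
        by (rule ereal_mult_left_mono) simp
      moreover have "ereal (1 / real n) * ereal (ln (\<delta> / 2) - real n * a) = ereal (ln (\<delta> / 2) * (1 / real n) - a)"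
        using elim(3) by (simp add: field_simps)
      ultimately have "ereal (ln (\<delta> / 2) * (1 / real n) - a) \<le> ereal (1 / real n) * beta \<epsilon> n P Q" by simp
      then have "ereal (ln (\<delta> / 2) * (1 / real n) - a) < ereal (- b)" using elim(1) by (rule order.strict_trans1)
      then show False using elim(2) by simp
    qed
  qed
qed



definition klr :: "real \<Rightarrow> real \<Rightarrow> real" where
  "klr p q = (if p = 0 then 0 else p * ln (p / q))"

lemma klr_ge_diff:
  assumes "p \<ge> 0" "q \<ge> 0" "p > 0 \<Longrightarrow> q > 0"
  shows "klr p q \<ge> p - q"
proof (cases "p = 0")
  case True then show ?thesis using assms by (simp add: klr_def)
next
  case False
  then have p: "p > 0" and q: "q > 0" using assms by auto
  have "ln (q / p) \<le> q / p - 1" by (rule ln_le_minus_one) (use p q in simp)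
  moreover have "ln (p / q) = - ln (q / p)" using p q by (simp add: ln_divide_pos)
  ultimately have "p * ln (p / q) \<ge> p * (1 - q / p)" using p by (intro mult_left_mono) auto
  also have "p * (1 - q / p) = p - q" using p by (simp add: field_simps)
  finally show ?thesis using False by (simp add: klr_def)
qed

lemma klr_logsum_term:
  assumes "p \<ge> 0" "q \<ge> 0" "p > 0 \<Longrightarrow> q > 0" "ps > 0" "qs > 0"
  shows "klr p q \<ge> p * ln (ps / qs) + p - q * ps / qs"
proof (cases "p = 0")
  case True then show ?thesis using assms by (simp add: klr_def)
next
  case False
  then have p: "p > 0" and q: "q > 0" using assms by auto
  have x: "q * ps / (p * qs) > 0" using p q assms(4,5) by simp
  have "ln (q * ps / (p * qs)) \<le> q * ps / (p * qs) - 1" by (rule ln_le_minus_one[OF x])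
  moreover have "ln (q * ps / (p * qs)) = ln q + ln ps - ln p - ln qs"
    using p q assms(4,5) by (simp add: ln_divide_pos ln_mult_pos)
  ultimately have "p * (ln p - ln q) \<ge> p * (ln ps - ln qs + 1 - q * ps / (p * qs))"
    using p by (intro mult_left_mono) auto
  also have "p * (ln ps - ln qs + 1 - q * ps / (p * qs)) = p * ln (ps / qs) + p - q * ps / qs"
    using p assms(4,5) by (simp add: ln_divide_pos field_simps)
  finally show ?thesis using False p q by (simp add: klr_def ln_divide_pos)
qed

lemma logsum:
  fixes p q :: "'b \<Rightarrow> real"
  assumes S: "finite S" and nn: "\<And>w. w \<in> S \<Longrightarrow> p w \<ge> 0 \<and> q w \<ge> 0 \<and> (p w > 0 \<longrightarrow> q w > 0)"
    and ps: "sum p S > 0"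
  shows "(\<Sum>w\<in>S. klr (p w) (q w)) \<ge> sum p S * ln (sum p S / sum q S)"
proof -
  obtain w0 where w0: "w0 \<in> S" "p w0 > 0"
  proof (rule ccontr)
    assume "\<not> thesis"
    then have "\<forall>w\<in>S. p w \<le> 0" using that by force
    then have "sum p S \<le> 0" by (simp add: sum_nonpos)
    then show False using ps by simp
  qed
  have "q w0 > 0" using nn[OF w0(1)] w0(2) by simp
  also have "q w0 \<le> sum q S" by (rule member_le_sum[OF w0(1)]) (use nn S in auto)
  finally have qs: "sum q S > 0" .
  have "(\<Sum>w\<in>S. klr (p w) (q w)) \<ge> (\<Sum>w\<in>S. p w * ln (sum p S / sum q S) + p w - q w * sum p S / sum q S)"
    by (rule sum_mono) (use nn ps qs in \<open>auto intro!: klr_logsum_term\<close>)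
  also have "(\<Sum>w\<in>S. p w * ln (sum p S / sum q S) + p w - q w * sum p S / sum q S)
      = sum p S * ln (sum p S / sum q S) + sum p S - sum q S * sum p S / sum q S"
    by (simp add: sum.distrib sum_subtractf sum_distrib_right sum_divide_distrib)
  also have "\<dots> = sum p S * ln (sum p S / sum q S)" using qs by simp
  finally show ?thesis .
qed

lemma relent_finite:
  fixes P Q :: "(int \<Rightarrow> 'a::finite) measure"
  assumes "relent P Q n \<noteq> \<infinity>"
  shows "\<forall>w\<in>words n. pw P n w > 0 \<longrightarrow> pw Q n w > 0"
    and "relent P Q n = ereal (\<Sum>w\<in>words n. klr (pw P n w) (pw Q n w))"
proof -
  show ac: "\<forall>w\<in>words n. pw P n w > 0 \<longrightarrow> pw Q n w > 0"
  proof (intro ballI impI, rule ccontr)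
    fix w assume w: "w \<in> words n" "pw P n w > 0" "\<not> pw Q n w > 0"
    then have "pw Q n w = 0" using marg_nonneg[of Q n "{w}"] by simp
    then have "kl_term (pw P n w) (pw Q n w) = \<infinity>" using w(2) by (simp add: kl_term_def)
    then have "relent P Q n = \<infinity>" unfolding relent_def using w(1) by (subst sum_Pinfty) auto
    then show False using assms by simp
  qed
  have "kl_term (pw P n w) (pw Q n w) = ereal (klr (pw P n w) (pw Q n w))" if "w \<in> words n" for w
  proof (cases "pw P n w = 0")
    case True then show ?thesis by (simp add: kl_term_def klr_def)
  next
    case False
    then have "pw P n w > 0" using marg_nonneg[of P n "{w}"] by simp
    then have "pw Q n w > 0" using ac that by blast
    then show ?thesis using False by (simp add: kl_term_def klr_def)
  qed
  then show "relent P Q n = ereal (\<Sum>w\<in>words n. klr (pw P n w) (pw Q n w))"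
    unfolding relent_def by (simp add: sum_ereal[symmetric] del: sum_ereal)
qed

lemma relent_nonneg:
  fixes P Q :: "(int \<Rightarrow> 'a::finite) measure"
  assumes prP: "process P" and prQ: "process Q"
  shows "relent P Q n \<ge> 0"
proof (cases "relent P Q n = \<infinity>")
  case True then show ?thesis by simp
next
  case False
  note f = relent_finite[OF False]
  have "(\<Sum>w\<in>words n. klr (pw P n w) (pw Q n w)) \<ge> (\<Sum>w\<in>words n. pw P n w) * ln ((\<Sum>w\<in>words n. pw P n w) / (\<Sum>w\<in>words n. pw Q n w))"
    by (rule logsum) (use f(1) marg_nonneg marg_sum_all[OF prP] in auto)
  then show ?thesis using f(2) marg_sum_all[OF prP] marg_sum_all[OF prQ] by simp
qed

lemma hrate_nonneg:
  fixes P Q :: "(int \<Rightarrow> 'a::finite) measure"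
  assumes prP: "process P" and prQ: "process Q" and ex: "rate_exists P Q"
  shows "hrate P Q \<ge> 0"
proof -
  obtain L where L: "relent_rate_seq P Q \<longlonglongrightarrow> L" using ex unfolding rate_exists_def by blast
  have h: "hrate P Q = L" unfolding hrate_def using L by (rule limI)
  have "relent_rate_seq P Q n \<ge> 0" for n
    unfolding relent_rate_seq_def using relent_nonneg[OF prP prQ, of n] by simp
  then have "0 \<le> L" using L by (intro LIMSEQ_le_const) auto
  then show ?thesis using h by simp
qed



lemma conv_bound:
  fixes P Q :: "(int \<Rightarrow> 'a::finite) measure"
  assumes prP: "process P" and prQ: "process Q"
    and fin: "relent P Q n \<noteq> \<infinity>" and Msub: "M \<subseteq> words n" and pM: "marg P n M > 0"
  shows "marg Q n M > 0"
    and "ln (marg Q n M) \<ge> - (real_of_ereal (relent P Q n) + 2) / marg P n M"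
proof -
  note f = relent_finite[OF fin]
  let ?T = "\<Sum>w\<in>words n. klr (pw P n w) (pw Q n w)"
  have finM: "finite M" by (rule finite_subset[OF Msub finite_words])
  have pMs: "marg P n M = (\<Sum>w\<in>M. pw P n w)" by (rule marg_sum[OF prP Msub])
  have qMs: "marg Q n M = (\<Sum>w\<in>M. pw Q n w)" by (rule marg_sum[OF prQ Msub])
  show qpos: "marg Q n M > 0"
  proof (rule ccontr)
    assume "\<not> marg Q n M > 0"
    then have "(\<Sum>w\<in>M. pw Q n w) = 0" using qMs marg_nonneg[of Q n M] by simp
    moreover have "\<forall>w\<in>M. pw Q n w \<ge> 0" using marg_nonneg by blast
    ultimately have "\<forall>w\<in>M. pw Q n w = 0" using sum_nonneg_eq_0_iff[OF finM, of "\<lambda>w. pw Q n w"] by blast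
    have "pw P n w = 0" if w: "w \<in> M" for w
    proof (rule ccontr)
      assume "pw P n w \<noteq> 0"
      then have "pw P n w > 0" using marg_nonneg[of P n "{w}"] by simp
      moreover have "w \<in> words n" using w Msub by blast
      ultimately have "pw Q n w > 0" using f(1) by blast
      then show False using \<open>\<forall>w\<in>M. pw Q n w = 0\<close> w by simp
    qed
    then have "\<forall>w\<in>M. pw P n w = 0" by blast
    then have "marg P n M = 0" using pMs by simp
    then show False using pM by simp
  qed
  have "?T = (\<Sum>w\<in>words n - M. klr (pw P n w) (pw Q n w)) + (\<Sum>w\<in>M. klr (pw P n w) (pw Q n w))"
    by (rule sum.subset_diff[OF Msub finite_words])
  moreover have "(\<Sum>w\<in>M. klr (pw P n w) (pw Q n w)) \<ge> marg P n M * ln (marg P n M / marg Q n M)"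
    unfolding pMs qMs
  proof (rule logsum[OF finM])
    fix w assume w: "w \<in> M"
    then have "w \<in> words n" using Msub by blast
    then show "pw P n w \<ge> 0 \<and> pw Q n w \<ge> 0 \<and> (pw P n w > 0 \<longrightarrow> pw Q n w > 0)"
      using f(1) marg_nonneg[of P n "{w}"] marg_nonneg[of Q n "{w}"] by blast
  next
    show "(\<Sum>w\<in>M. pw P n w) > 0" using pMs pM by simp
  qed
  moreover have "(\<Sum>w\<in>words n - M. klr (pw P n w) (pw Q n w)) \<ge> -1"
  proof -
    have "(\<Sum>w\<in>words n - M. klr (pw P n w) (pw Q n w)) \<ge> (\<Sum>w\<in>words n - M. pw P n w - pw Q n w)"
      by (rule sum_mono) (use f(1) marg_nonneg in \<open>auto intro!: klr_ge_diff\<close>)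
    also have "(\<Sum>w\<in>words n - M. pw P n w - pw Q n w) = marg P n (words n - M) - marg Q n (words n - M)"
      by (simp add: sum_subtractf marg_sum[OF prP, of "words n - M" n] marg_sum[OF prQ, of "words n - M" n])
    also have "\<dots> \<ge> -1" using marg_nonneg[of P n "words n - M"] marg_le1[OF prQ, of n "words n - M"] by simp
    finally show ?thesis by simp
  qed
  moreover have "marg P n M * ln (marg P n M / marg Q n M) = klr (marg P n M) 1 - marg P n M * ln (marg Q n M)"
    using pM qpos by (simp add: klr_def ln_divide_pos algebra_simps)
  moreover have "klr (marg P n M) 1 \<ge> marg P n M - 1" by (rule klr_ge_diff) (use pM in auto)
  ultimately have "?T \<ge> - 2 - marg P n M * ln (marg Q n M)" using pM by linarith
  then have "- (?T + 2) \<le> marg P n M * ln (marg Q n M)" by linarith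
  then have "- (?T + 2) / marg P n M \<le> ln (marg Q n M)" using pM by (simp add: divide_le_eq mult.commute)
  then show "ln (marg Q n M) \<ge> - (real_of_ereal (relent P Q n) + 2) / marg P n M" using f(2) by simp
qed

lemma conv_one:
  fixes P Q :: "(int \<Rightarrow> 'a::finite) measure"
  assumes prP: "process P" and prQ: "process Q" and ex: "rate_exists P Q"
    and Msub: "\<forall>n. M n \<subseteq> words n" and Mlim: "(\<lambda>n. marg P n (M n)) \<longlonglongrightarrow> 1"
  shows "liminf (\<lambda>n. ereal (1 / real n) * eln (marg Q n (M n))) \<ge> - hrate P Q"
proof -
  obtain L where L: "relent_rate_seq P Q \<longlonglongrightarrow> L" using ex unfolding rate_exists_def by blast
  have h: "hrate P Q = L" unfolding hrate_def using L by (rule limI)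
  have L0: "L \<ge> 0" using hrate_nonneg[OF prP prQ ex] h by simp
  show ?thesis
  proof (cases L)
    case PInf then show ?thesis using h by simp
  next
    case MInf then show ?thesis using L0 by simp
  next
    case (real l)
    have ev1: "eventually (\<lambda>n. relent_rate_seq P Q n < ereal (l + 1)) sequentially"
      using L real by (intro order_tendstoD(2)) auto
    have ev2: "eventually (\<lambda>n. marg P n (M n) > 1/2) sequentially"
      using Mlim by (rule order_tendstoD(1)) simp
    define g where "g n = - (real_of_ereal (relent_rate_seq P Q n) + 2 * (1 / real n)) / marg P n (M n)" for n
    have "g \<longlonglongrightarrow> - (l + 2 * 0) / 1"
      unfolding g_def using L real Mlim by (intro tendsto_intros lim_real_of_ereal) auto
    then have gl: "(\<lambda>n. ereal (g n)) \<longlonglongrightarrow> ereal (- l)" by (intro tendsto_ereal) simp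
    have ev: "eventually (\<lambda>n. ereal (g n) \<le> ereal (1 / real n) * eln (marg Q n (M n))) sequentially"
      using ev1 ev2 eventually_ge_at_top[of 1]
    proof eventually_elim
      case (elim n)
      have rn: "real n > 0" using elim(3) by simp
      have fin: "relent P Q n \<noteq> \<infinity>"
      proof
        assume "relent P Q n = \<infinity>"
        then have "relent_rate_seq P Q n = \<infinity>" unfolding relent_rate_seq_def using rn by simp
        then show False using elim(1) by simp
      qed
      have pM: "marg P n (M n) > 0" using elim(2) by simp
      note cb = conv_bound[OF prP prQ fin Msub[rule_format] pM]
      obtain T where T: "relent P Q n = ereal T" using fin relent_nonneg[OF prP prQ, of n] by (cases "relent P Q n") auto
      have rr: "real_of_ereal (relent_rate_seq P Q n) = T / real n"
        unfolding relent_rate_seq_def T by simp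
      have "g n = - (T + 2) / marg P n (M n) / real n"
        unfolding g_def rr using rn by (simp add: field_simps) (simp add: minus_divide_left)
      also have "\<dots> \<le> ln (marg Q n (M n)) / real n"
        using cb(2) rn T by (intro divide_right_mono) auto
      finally have "ereal (g n) \<le> ereal (ln (marg Q n (M n)) / real n)" by simp
      also have "\<dots> = ereal (1 / real n) * eln (marg Q n (M n))"
        using cb(1) unfolding eln_def by simp
      finally show ?case .
    qed
    have "ereal (- l) = liminf (\<lambda>n. ereal (g n))"
      using gl by (intro lim_imp_Liminf[symmetric]) auto
    also have "\<dots> \<le> liminf (\<lambda>n. ereal (1 / real n) * eln (marg Q n (M n)))"
      by (rule Liminf_mono[OF ev])
    finally show ?thesis using h real by simp
  qed
qed

lemma conv_set:
  fixes Q :: "(int \<Rightarrow> 'a::finite) measure"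
  assumes prQ: "process Q" and H: "\<forall>P\<in>\<Omega>. process P \<and> rate_exists P Q"
    and Msub: "\<forall>n. M n \<subseteq> words n" and Mlim: "\<forall>P\<in>\<Omega>. (\<lambda>n. marg P n (M n)) \<longlonglongrightarrow> 1"
  shows "liminf (\<lambda>n. ereal (1 / real n) * eln (marg Q n (M n))) \<ge> - hrate_set \<Omega> Q"
proof -
  let ?l = "liminf (\<lambda>n. ereal (1 / real n) * eln (marg Q n (M n)))"
  have "- ?l \<le> hrate_set \<Omega> Q" unfolding hrate_set_def
  proof (rule INF_greatest)
    fix P assume P: "P \<in> \<Omega>"
    have "- hrate P Q \<le> ?l" using conv_one[OF _ prQ _ Msub] H Mlim P by blast
    then show "- ?l \<le> hrate P Q" by (simp add: ereal_uminus_le_reorder)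
  qed
  then show ?thesis by (simp add: ereal_uminus_le_reorder)
qed



lemma hrate_set_nonneg:
  fixes Q :: "(int \<Rightarrow> 'a::finite) measure"
  assumes prQ: "process Q" and H: "\<forall>P\<in>\<Omega>. process P \<and> rate_exists P Q"
  shows "hrate_set \<Omega> Q \<ge> 0"
  unfolding hrate_set_def by (rule INF_greatest) (use H hrate_nonneg[OF _ prQ] in blast)

lemma Q_small:
  fixes Q :: "(int \<Rightarrow> 'a::finite) measure"
  assumes prQ: "process Q"
  shows "marg Q n {w\<in>words n. pw Q n w \<le> R n w * exp (- (real n * c))} \<le> exp (- (real n * c))"
proof -
  let ?M = "{w\<in>words n. pw Q n w \<le> R n w * exp (- (real n * c))}"
  have sub: "?M \<subseteq> words n" by auto
  have "marg Q n ?M = (\<Sum>w\<in>?M. pw Q n w)" by (rule marg_sum[OF prQ sub])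
  also have "\<dots> \<le> (\<Sum>w\<in>?M. R n w * exp (- (real n * c)))" by (rule sum_mono) simp
  also have "\<dots> \<le> (\<Sum>w\<in>(words n :: 'a list set). R n w * exp (- (real n * c)))"
    by (rule sum_mono2[OF finite_words sub]) (simp add: R_nonneg)
  also have "\<dots> = (\<Sum>w\<in>(words n :: 'a list set). R n w) * exp (- (real n * c))"
    by (simp add: sum_distrib_right)
  also have "\<dots> \<le> 1 * exp (- (real n * c))"
    by (rule mult_right_mono[OF R_sum]) simp
  finally show ?thesis by simp
qed

lemma limsup_small:
  fixes Q :: "(int \<Rightarrow> 'a::finite) measure"
  assumes prQ: "process Q"
  shows "limsup (\<lambda>n. ereal (1 / real n) * eln (marg Q n {w\<in>words n. pw Q n w \<le> R n w * exp (- (real n * c))}))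
           \<le> ereal (- c)"
proof (rule Limsup_bounded)
  show "eventually (\<lambda>n. ereal (1 / real n) * eln (marg Q n {w\<in>words n. pw Q n w \<le> R n w * exp (- (real n * c))}) \<le> ereal (- c)) sequentially"
    using eventually_ge_at_top[of 1]
  proof eventually_elim
    case (elim n)
    let ?q = "marg Q n {w\<in>words n. pw Q n w \<le> R n w * exp (- (real n * c))}"
    have rn: "real n > 0" using elim by simp
    have qb: "?q \<le> exp (- (real n * c))" by (rule Q_small[OF prQ])
    show ?case
    proof (cases "?q = 0")
      case True then show ?thesis using rn by (simp add: eln_def)
    next
      case False
      then have qp: "?q > 0" using marg_nonneg[of Q n] by (simp add: less_le)
      have "ln ?q \<le> ln (exp (- (real n * c)))" using qp qb by (subst ln_le_cancel_iff) auto
      then have "ln ?q \<le> - (real n * c)" by simp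
      then have "ln ?q / real n \<le> - c" using rn by (simp add: divide_le_eq mult.commute)
      then show ?thesis using False rn by (simp add: eln_def)
    qed
  qed
qed

lemma marg_union_le:
  fixes P :: "(int \<Rightarrow> 'a::finite) measure"
  assumes pr: "process P" "A \<subseteq> words n" "B \<subseteq> words n"
  shows "marg P n (A \<union> B) \<le> marg P n A + marg P n B"
proof -
  have fA: "finite A" "finite B" using finite_subset[OF assms(2) finite_words] finite_subset[OF assms(3) finite_words] by auto
  have "marg P n (A \<union> B) = (\<Sum>w\<in>A \<union> B. pw P n w)" by (rule marg_sum) (use assms in auto)
  also have "\<dots> \<le> (\<Sum>w\<in>A. pw P n w) + (\<Sum>w\<in>B. pw P n w)"
  proof -
    have "0 \<le> (\<Sum>w\<in>A \<inter> B. pw P n w)" by (rule sum_nonneg) (rule marg_nonneg)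
    then show ?thesis using sum_Un[OF fA, of "\<lambda>w. pw P n w"] by simp
  qed
  also have "\<dots> = marg P n A + marg P n B" using marg_sum[OF pr(1) assms(2)] marg_sum[OF pr(1) assms(3)] by simp
  finally show ?thesis .
qed

lemma M_tendsto:
  fixes P Q :: "(int \<Rightarrow> 'a::finite) measure"
  assumes erg: "ergodic_process P" and prQ: "process Q"
    and cond: "\<forall>\<epsilon>. 0 < \<epsilon> \<and> \<epsilon> < 1 \<longrightarrow> beta_bar \<epsilon> P Q \<le> - hrate P Q"
    and eta: "\<eta> > 0" and a: "ereal (c + \<eta> / 2) < hrate P Q"
  shows "(\<lambda>n. marg P n {w\<in>words n. pw Q n w \<le> R n w * exp (- (real n * c))}) \<longlonglongrightarrow> 1"
proof -
  have prP: "process P" using erg by (rule ergodic_process_process)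
  let ?M = "\<lambda>n. {w\<in>words n. pw Q n w \<le> R n w * exp (- (real n * c))}"
  let ?S = "\<lambda>n. Sset P Q (c + \<eta> / 2) n"
  let ?B = "\<lambda>n. Bset P (\<eta> / 2) n"
  have S0: "(\<lambda>n. marg P n (?S n)) \<longlonglongrightarrow> 0" by (rule spectrum[OF prP prQ cond a])
  have B0: "(\<lambda>n. marg P n (?B n)) \<longlonglongrightarrow> 0" by (rule universal[OF erg]) (use eta in simp)
  have sub: "words n - ?M n \<subseteq> ?S n \<union> ?B n" for n
  proof
    fix w assume w: "w \<in> words n - ?M n"
    then have wn: "w \<in> words n" and q: "pw Q n w > R n w * exp (- (real n * c))" by auto
    show "w \<in> ?S n \<union> ?B n"
    proof (rule ccontr)
      assume "w \<notin> ?S n \<union> ?B n"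
      then have nS: "pw Q n w \<le> pw P n w * exp (- (real n * (c + \<eta> / 2)))"
        and nB: "\<not> (pw P n w > 0 \<and> R n w < pw P n w * exp (- (real n * (\<eta> / 2))))"
        using wn unfolding Sset_def Bset_def by auto
      show False
      proof (cases "pw P n w > 0")
        case False
        then have "pw P n w = 0" using marg_nonneg[of P n "{w}"] by simp
        then have "pw Q n w \<le> 0" using nS by simp
        moreover have "R n w * exp (- (real n * c)) \<ge> 0" using R_nonneg[of n w] by simp
        ultimately show False using q by simp
      next
        case True
        then have Rb: "R n w \<ge> pw P n w * exp (- (real n * (\<eta> / 2)))" using nB by simp
        have "pw Q n w \<le> pw P n w * exp (- (real n * (c + \<eta> / 2)))" by (rule nS)
        also have "\<dots> = pw P n w * exp (- (real n * (\<eta> / 2))) * exp (- (real n * c))"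
          by (simp add: exp_add[symmetric] algebra_simps)
        also have "\<dots> \<le> R n w * exp (- (real n * c))" using Rb by (intro mult_right_mono) auto
        finally show False using q by simp
      qed
    qed
  qed
  have low: "1 - (marg P n (?S n) + marg P n (?B n)) \<le> marg P n (?M n)" for n
  proof -
    have Ssub: "?S n \<subseteq> words n" unfolding Sset_def by auto
    have Bsub: "?B n \<subseteq> words n" unfolding Bset_def by auto
    have "marg P n (words n - ?M n) \<le> marg P n (?S n \<union> ?B n)" by (rule marg_mono[OF prP sub])
    also have "\<dots> \<le> marg P n (?S n) + marg P n (?B n)" by (rule marg_union_le[OF prP Ssub Bsub])
    finally show ?thesis using marg_compl[OF prP, of "?M n" n] by auto
  qed
  have "(\<lambda>n. 1 - (marg P n (?S n) + marg P n (?B n))) \<longlonglongrightarrow> 1 - (0 + 0)"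
    by (intro tendsto_intros S0 B0)
  then have lo: "(\<lambda>n. 1 - (marg P n (?S n) + marg P n (?B n))) \<longlonglongrightarrow> 1" by simp
  show ?thesis
    by (rule tendsto_sandwich[OF always_eventually always_eventually lo tendsto_const])
       (use low marg_le1[OF prP] in auto)
qed



lemma forward:
  fixes Q :: "(int \<Rightarrow> 'a::finite) measure"
    and \<Theta> :: "(int \<Rightarrow> 'a) measure set"
  assumes prQ: "process Q"
    and erg: "\<forall>P\<in>\<Theta>. ergodic_process P"
    and ex: "\<forall>P\<in>\<Theta>. rate_exists P Q"
    and H1: "\<forall>P\<in>\<Theta>. \<forall>\<epsilon>. 0 < \<epsilon> \<and> \<epsilon> < 1 \<longrightarrow> beta_bar \<epsilon> P Q \<le> - hrate P Q"
    and Om: "\<Omega> \<subseteq> \<Theta>" and eta: "\<eta> > 0"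
  shows "\<exists>M :: nat \<Rightarrow> 'a list set. (\<forall>n. M n \<subseteq> words n) \<and>
            (\<forall>P\<in>\<Omega>. (\<lambda>n. marg P n (M n)) \<longlonglongrightarrow> 1) \<and>
            (if hrate_set \<Omega> Q < \<infinity>
             then limsup (\<lambda>n. ereal (1 / real n) * eln (marg Q n (M n)))
                    \<le> - hrate_set \<Omega> Q + ereal \<eta>
             else limsup (\<lambda>n. ereal (1 / real n) * eln (marg Q n (M n)))
                    \<le> ereal (- 1 / \<eta>))"
proof -
  have HOm: "\<forall>P\<in>\<Omega>. process P \<and> rate_exists P Q"
    using Om erg ex ergodic_process_process by blast
  have hs0: "hrate_set \<Omega> Q \<ge> 0" by (rule hrate_set_nonneg[OF prQ HOm])
  define c where "c = (if hrate_set \<Omega> Q < \<infinity> then real_of_ereal (hrate_set \<Omega> Q) - \<eta> else 1 / \<eta>)"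
  define M where "M n = {w\<in>words n. pw Q n w \<le> R n w * exp (- (real n * c))}" for n
  have a: "ereal (c + \<eta> / 2) < hrate P Q" if P: "P \<in> \<Omega>" for P
  proof -
    have le: "hrate_set \<Omega> Q \<le> hrate P Q" unfolding hrate_set_def using P by (rule INF_lower)
    show ?thesis
    proof (cases "hrate_set \<Omega> Q < \<infinity>")
      case True
      then obtain hs where hs: "hrate_set \<Omega> Q = ereal hs" using hs0 by (cases "hrate_set \<Omega> Q") auto
      have "ereal (c + \<eta> / 2) < ereal hs" using True hs eta unfolding c_def by simp
      then show ?thesis using le hs by (metis order.strict_trans2)
    next
      case False
      then have "hrate P Q = \<infinity>" using le by (simp add: top_unique[where 'a=ereal, unfolded top_ereal_def])
      then show ?thesis by simp
    qed
  qed
  show ?thesis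
  proof (intro exI[of _ M] conjI ballI)
    show "\<forall>n. M n \<subseteq> words n" unfolding M_def by auto
  next
    fix P assume P: "P \<in> \<Omega>"
    show "(\<lambda>n. marg P n (M n)) \<longlonglongrightarrow> 1" unfolding M_def
      by (rule M_tendsto[OF _ prQ _ eta a[OF P]]) (use P Om erg H1 in auto)
  next
    have ls: "limsup (\<lambda>n. ereal (1 / real n) * eln (marg Q n (M n))) \<le> ereal (- c)"
      unfolding M_def by (rule limsup_small[OF prQ])
    show "if hrate_set \<Omega> Q < \<infinity>
             then limsup (\<lambda>n. ereal (1 / real n) * eln (marg Q n (M n)))
                    \<le> - hrate_set \<Omega> Q + ereal \<eta>
             else limsup (\<lambda>n. ereal (1 / real n) * eln (marg Q n (M n)))
                    \<le> ereal (- 1 / \<eta>)"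
    proof (cases "hrate_set \<Omega> Q < \<infinity>")
      case True
      then obtain hs where hs: "hrate_set \<Omega> Q = ereal hs" using hs0 by (cases "hrate_set \<Omega> Q") auto
      have "ereal (- c) = - hrate_set \<Omega> Q + ereal \<eta>" using True hs unfolding c_def by simp
      then show ?thesis using True ls by simp
    next
      case False
      have "ereal (- c) = ereal (- 1 / \<eta>)" using False unfolding c_def by simp
      then show ?thesis using False ls by simp
    qed
  qed
qed

lemma backward_one:
  fixes Q P :: "(int \<Rightarrow> 'a::finite) measure"
  assumes prP: "process P" and prQ: "process Q" and ex: "rate_exists P Q"
    and H: "\<forall>\<eta>::real. \<eta> > 0 \<longrightarrow>
         (\<exists>M :: nat \<Rightarrow> 'a list set. (\<forall>n. M n \<subseteq> words n) \<and>
            (\<forall>P\<in>{P}. (\<lambda>n. marg P n (M n)) \<longlonglongrightarrow> 1) \<and>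
            (if hrate_set {P} Q < \<infinity>
             then limsup (\<lambda>n. ereal (1 / real n) * eln (marg Q n (M n)))
                    \<le> - hrate_set {P} Q + ereal \<eta>
             else limsup (\<lambda>n. ereal (1 / real n) * eln (marg Q n (M n)))
                    \<le> ereal (- 1 / \<eta>)))"
    and e: "0 < \<epsilon>" "\<epsilon> < 1"
  shows "beta_bar \<epsilon> P Q \<le> - hrate P Q"
proof -
  have hs: "hrate_set {P} Q = hrate P Q" unfolding hrate_set_def by simp
  have step: "beta_bar \<epsilon> P Q \<le> limsup (\<lambda>n. ereal (1 / real n) * eln (marg Q n (M n)))"
    if Msub: "\<forall>n. M n \<subseteq> words n" and Ml: "(\<lambda>n. marg P n (M n)) \<longlonglongrightarrow> 1" for M
  proof -
    have ev: "eventually (\<lambda>n. marg P n (M n) > 1 - \<epsilon>) sequentially"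
      using Ml by (rule order_tendstoD(1)) (use e in simp)
    have "eventually (\<lambda>n. ereal (1 / real n) * beta \<epsilon> n P Q \<le> ereal (1 / real n) * eln (marg Q n (M n))) sequentially"
      using ev
    proof eventually_elim
      case (elim n)
      have "beta \<epsilon> n P Q \<le> eln (marg Q n (M n))"
        by (rule beta_le) (use Msub elim in auto)
      then show ?case by (rule ereal_mult_left_mono) simp
    qed
    then show ?thesis unfolding beta_bar_def by (rule Limsup_mono)
  qed
  show ?thesis
  proof (cases "hrate P Q < \<infinity>")
    case True
    show ?thesis
    proof (rule ereal_le_epsilon2)
      fix \<eta> :: real assume eta: "\<eta> > 0"
      obtain M where M: "\<forall>n. M n \<subseteq> words n" "(\<lambda>n. marg P n (M n)) \<longlonglongrightarrow> 1"
        "limsup (\<lambda>n. ereal (1 / real n) * eln (marg Q n (M n))) \<le> - hrate_set {P} Q + ereal \<eta>"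
        using H eta True hs by auto
      show "beta_bar \<epsilon> P Q \<le> - hrate P Q + ereal \<eta>"
        using step[OF M(1,2)] M(3) hs by simp
    qed
  next
    case False
    then have hinf: "hrate P Q = \<infinity>" by (simp add: top_unique[where 'a=ereal, unfolded top_ereal_def])
    have bnd: "beta_bar \<epsilon> P Q \<le> ereal (- 1 / \<eta>)" if eta: "\<eta> > 0" for \<eta> :: real
    proof -
      obtain M where M: "\<forall>n. M n \<subseteq> words n" "(\<lambda>n. marg P n (M n)) \<longlonglongrightarrow> 1"
        "limsup (\<lambda>n. ereal (1 / real n) * eln (marg Q n (M n))) \<le> ereal (- 1 / \<eta>)"
        using H eta hinf hs by auto
      show ?thesis using step[OF M(1,2)] M(3) by simp
    qed
    have "beta_bar \<epsilon> P Q = - \<infinity>"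
    proof (cases "beta_bar \<epsilon> P Q")
      case (real r)
      have "beta_bar \<epsilon> P Q \<le> ereal (- 1 / (1 / (\<bar>r\<bar> + 1)))" by (rule bnd) simp
      then show ?thesis using real by simp
    next
      case PInf
      then show ?thesis using bnd[of 1] by simp
    qed simp
    then show ?thesis by simp
  qed
qed

theorem mainTheorem2:
  fixes Q :: "(int \<Rightarrow> 'a::finite) measure"
    and \<Theta> :: "(int \<Rightarrow> 'a) measure set"
  assumes "process Q"
    and "\<forall>P\<in>\<Theta>. ergodic_process P"
    and "\<forall>P\<in>\<Theta>. rate_exists P Q"
  shows "(\<forall>P\<in>\<Theta>. \<forall>\<epsilon>. 0 < \<epsilon> \<and> \<epsilon> < 1 \<longrightarrow> beta_bar \<epsilon> P Q \<le> - hrate P Q)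
    \<longleftrightarrow>
    (\<forall>\<Omega>. \<Omega> \<subseteq> \<Theta> \<longrightarrow>
      (\<forall>\<eta>::real. \<eta> > 0 \<longrightarrow>
         (\<exists>M :: nat \<Rightarrow> 'a list set. (\<forall>n. M n \<subseteq> words n) \<and>
            (\<forall>P\<in>\<Omega>. (\<lambda>n. marg P n (M n)) \<longlonglongrightarrow> 1) \<and>
            (if hrate_set \<Omega> Q < \<infinity>
             then limsup (\<lambda>n. ereal (1 / real n) * eln (marg Q n (M n)))
                    \<le> - hrate_set \<Omega> Q + ereal \<eta>
             else limsup (\<lambda>n. ereal (1 / real n) * eln (marg Q n (M n)))
                    \<le> ereal (- 1 / \<eta>)))) \<and>
      (\<forall>M' :: nat \<Rightarrow> 'a list set. (\<forall>n. M' n \<subseteq> words n) \<and>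
            (\<forall>P\<in>\<Omega>. (\<lambda>n. marg P n (M' n)) \<longlonglongrightarrow> 1) \<longrightarrow>
         liminf (\<lambda>n. ereal (1 / real n) * eln (marg Q n (M' n))) \<ge> - hrate_set \<Omega> Q))"
proof
  assume H1: "\<forall>P\<in>\<Theta>. \<forall>\<epsilon>. 0 < \<epsilon> \<and> \<epsilon> < 1 \<longrightarrow> beta_bar \<epsilon> P Q \<le> - hrate P Q"
  show "\<forall>\<Omega>. \<Omega> \<subseteq> \<Theta> \<longrightarrow>
      (\<forall>\<eta>::real. \<eta> > 0 \<longrightarrow>
         (\<exists>M :: nat \<Rightarrow> 'a list set. (\<forall>n. M n \<subseteq> words n) \<and>
            (\<forall>P\<in>\<Omega>. (\<lambda>n. marg P n (M n)) \<longlonglongrightarrow> 1) \<and>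
            (if hrate_set \<Omega> Q < \<infinity>
             then limsup (\<lambda>n. ereal (1 / real n) * eln (marg Q n (M n)))
                    \<le> - hrate_set \<Omega> Q + ereal \<eta>
             else limsup (\<lambda>n. ereal (1 / real n) * eln (marg Q n (M n)))
                    \<le> ereal (- 1 / \<eta>)))) \<and>
      (\<forall>M' :: nat \<Rightarrow> 'a list set. (\<forall>n. M' n \<subseteq> words n) \<and>
            (\<forall>P\<in>\<Omega>. (\<lambda>n. marg P n (M' n)) \<longlonglongrightarrow> 1) \<longrightarrow>
         liminf (\<lambda>n. ereal (1 / real n) * eln (marg Q n (M' n))) \<ge> - hrate_set \<Omega> Q)"
  proof (intro allI impI conjI)
    fix \<Omega> and \<eta> :: real assume Om: "\<Omega> \<subseteq> \<Theta>" and eta: "\<eta> > 0"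
    show "\<exists>M :: nat \<Rightarrow> 'a list set. (\<forall>n. M n \<subseteq> words n) \<and>
            (\<forall>P\<in>\<Omega>. (\<lambda>n. marg P n (M n)) \<longlonglongrightarrow> 1) \<and>
            (if hrate_set \<Omega> Q < \<infinity>
             then limsup (\<lambda>n. ereal (1 / real n) * eln (marg Q n (M n)))
                    \<le> - hrate_set \<Omega> Q + ereal \<eta>
             else limsup (\<lambda>n. ereal (1 / real n) * eln (marg Q n (M n)))
                    \<le> ereal (- 1 / \<eta>))"
      by (rule forward[OF assms H1 Om eta])
  next
    fix \<Omega> and M' :: "nat \<Rightarrow> 'a list set"
    assume Om: "\<Omega> \<subseteq> \<Theta>" and M': "(\<forall>n. M' n \<subseteq> words n) \<and> (\<forall>P\<in>\<Omega>. (\<lambda>n. marg P n (M' n)) \<longlonglongrightarrow> 1)"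
    have HOm: "\<forall>P\<in>\<Omega>. process P \<and> rate_exists P Q"
      using Om assms(2,3) ergodic_process_process by blast
    show "liminf (\<lambda>n. ereal (1 / real n) * eln (marg Q n (M' n))) \<ge> - hrate_set \<Omega> Q"
      by (rule conv_set[OF assms(1) HOm]) (use M' in auto)
  qed
next
  assume H2: "\<forall>\<Omega>. \<Omega> \<subseteq> \<Theta> \<longrightarrow>
      (\<forall>\<eta>::real. \<eta> > 0 \<longrightarrow>
         (\<exists>M :: nat \<Rightarrow> 'a list set. (\<forall>n. M n \<subseteq> words n) \<and>
            (\<forall>P\<in>\<Omega>. (\<lambda>n. marg P n (M n)) \<longlonglongrightarrow> 1) \<and>
            (if hrate_set \<Omega> Q < \<infinity>
             then limsup (\<lambda>n. ereal (1 / real n) * eln (marg Q n (M n)))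
                    \<le> - hrate_set \<Omega> Q + ereal \<eta>
             else limsup (\<lambda>n. ereal (1 / real n) * eln (marg Q n (M n)))
                    \<le> ereal (- 1 / \<eta>)))) \<and>
      (\<forall>M' :: nat \<Rightarrow> 'a list set. (\<forall>n. M' n \<subseteq> words n) \<and>
            (\<forall>P\<in>\<Omega>. (\<lambda>n. marg P n (M' n)) \<longlonglongrightarrow> 1) \<longrightarrow>
         liminf (\<lambda>n. ereal (1 / real n) * eln (marg Q n (M' n))) \<ge> - hrate_set \<Omega> Q)"
  show "\<forall>P\<in>\<Theta>. \<forall>\<epsilon>. 0 < \<epsilon> \<and> \<epsilon> < 1 \<longrightarrow> beta_bar \<epsilon> P Q \<le> - hrate P Q"
  proof (intro ballI allI impI)
    fix P and \<epsilon> :: real assume P: "P \<in> \<Theta>" and e: "0 < \<epsilon> \<and> \<epsilon> < 1"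
    have "{P} \<subseteq> \<Theta>" using P by simp
    then have H: "\<forall>\<eta>::real. \<eta> > 0 \<longrightarrow>
         (\<exists>M :: nat \<Rightarrow> 'a list set. (\<forall>n. M n \<subseteq> words n) \<and>
            (\<forall>P\<in>{P}. (\<lambda>n. marg P n (M n)) \<longlonglongrightarrow> 1) \<and>
            (if hrate_set {P} Q < \<infinity>
             then limsup (\<lambda>n. ereal (1 / real n) * eln (marg Q n (M n)))
                    \<le> - hrate_set {P} Q + ereal \<eta>
             else limsup (\<lambda>n. ereal (1 / real n) * eln (marg Q n (M n)))
                    \<le> ereal (- 1 / \<eta>)))"
      using H2 by blast
    show "beta_bar \<epsilon> P Q \<le> - hrate P Q"
      by (rule backward_one[OF _ assms(1) _ H]) (use P e assms(2,3) ergodic_process_process in auto)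
  qed
qed


end
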